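(* Let $\delta\in[0,1]$, $m$ an order function on $\mathbb R^d\times\mathbb T^d$ and $a\in S^0_\delta(m)(\mathbb R^d\times\mathbb T^d)$. Then for fixed $\varepsilon>0$ the operator $\mathrm{Op}^{\mathbb T}_\varepsilon(a)$ is continuous from $s((\varepsilon\mathbb Z)^d)$ to $s((\varepsilon\mathbb Z)^d)$.
   Context: $\mathbb T^d=\mathbb R^d/2\pi\mathbb Z^d$; functions on $\mathbb T^d$ are identified with $2\pi$-periodic functions on $\mathbb R^d$. An order function is $m:\mathbb R^d\times\mathbb T^d\to[0,\infty)$ with $m(x,\xi)\le C_0\langle x-y\rangle^{N_1}m(y,\eta)$ for all $x,y,\xi,\eta$, where $\langle x\rangle=\sqrt{1+|x|^2}$. $S^k_\delta(m)(\mathbb R^d\times\mathbb T^d)$ is the set of smooth functions $a(x,\xi;\varepsilon)$ on $\mathbb R^d\times\mathbb T^d\times(0,1]$ such that $|\partial^\alpha_x\partial^\beta_\xi a|\le C_{\alpha\beta}m(x,\xi)\varepsilon^{k-\delta(|\alpha|+|\beta|)}$ for all $\alpha,\beta$. $\mathrm{Op}^{\mathbb T}_\varepsilon(a)v(x)=(2\pi)^{-d}\sum_{y\in(\varepsilon\mathbb Z)^d}\int_{[-\pi,\pi]^d}e^{i(y-x)\cdot\xi/\varepsilon}a(x,\xi;\varepsilon)v(y)\,d\xi$. $s((\varepsilon\mathbb Z)^d)$ is the space of $u:(\varepsilon\mathbb Z)^d\to\mathbb C$ with $\|u\|_\alpha:=\sup_x|x^\alpha u(x)|<\infty$ for all $\alpha\in\mathbb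 N^d$, with the Fréchet topology of these seminorms. *)

theory Defs
  imports "HOL-Analysis.Analysis"
begin

fun dd :: "'a::real_normed_vector list \<Rightarrow> ('a \<Rightarrow> 'b::real_normed_vector) \<Rightarrow> 'a \<Rightarrow> 'b" where
  "dd [] f = f"
| "dd (v # vs) f = (\<lambda>z. frechet_derivative (dd vs f) (at z) v)"

definition smooth_fun :: "('a::euclidean_space \<Rightarrow> 'b::real_normed_vector) \<Rightarrow> bool" where
  "smooth_fun f \<longleftrightarrow> (\<forall>vs. set vs \<subseteq> Basis \<longrightarrow> (\<forall>z. dd vs f differentiable (at z)))"

definition jbr :: "real^'n \<Rightarrow> real" where
  "jbr x = sqrt (1 + (norm x)\<^sup>2)"

text \<open>Functions on R^d x T^d: 2 pi periodic in every coordinate of the second variable.\<close>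
definition periodic_xi :: "(real^'n \<Rightarrow> real^'n \<Rightarrow> 'b) \<Rightarrow> bool" where
  "periodic_xi f \<longleftrightarrow> (\<forall>j x \<xi>. f x (\<xi> + axis j (2 * pi)) = f x \<xi>)"

definition order_function :: "(real^'n \<Rightarrow> real^'n \<Rightarrow> real) \<Rightarrow> bool" where
  "order_function m \<longleftrightarrow> periodic_xi m \<and> (\<forall>x \<xi>. 0 \<le> m x \<xi>) \<and>
     (\<exists>C0 N1. \<forall>x y \<xi> \<eta>. m x \<xi> \<le> C0 * jbr (x - y) powr N1 * m y \<eta>)"

text \<open>Symbol class S^k_delta(m)(R^d x T^d); symbols a x xi eps with eps in (0,1].
  Derivatives are taken in the joint variable (x, xi); a list of coordinate directions of length
  |alpha|+|beta| corresponds to the multi-index derivative.\<close>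
definition symbol_class :: "real \<Rightarrow> real \<Rightarrow> (real^'n \<Rightarrow> real^'n \<Rightarrow> real)
    \<Rightarrow> (real^'n \<Rightarrow> real^'n \<Rightarrow> real \<Rightarrow> complex) \<Rightarrow> bool" where
  "symbol_class k \<delta> m a \<longleftrightarrow>
     (\<forall>\<epsilon>\<in>{0<..1}. periodic_xi (\<lambda>x \<xi>. a x \<xi> \<epsilon>) \<and> smooth_fun (\<lambda>z. a (fst z) (snd z) \<epsilon>)) \<and>
     (\<forall>vs. set vs \<subseteq> Basis \<longrightarrow>
        (\<exists>C. \<forall>\<epsilon>\<in>{0<..1}. \<forall>x \<xi>.
           norm (dd vs (\<lambda>z. a (fst z) (snd z) \<epsilon>) (x, \<xi>))
             \<le> C * m x \<xi> * \<epsilon> powr (k - \<delta> * real (length vs))))"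

text \<open>The lattice (eps Z)^d, parametrised by Z^d: k \<mapsto> eps k.\<close>
definition lat :: "real \<Rightarrow> int^'n \<Rightarrow> real^'n" where
  "lat \<epsilon> k = (\<chi> i. \<epsilon> * of_int (k $ i))"

definition OpT :: "real \<Rightarrow> (real^'n \<Rightarrow> real^'n \<Rightarrow> real \<Rightarrow> complex)
    \<Rightarrow> (int^'n \<Rightarrow> complex) \<Rightarrow> int^'n \<Rightarrow> complex" where
  "OpT \<epsilon> a v k = complex_of_real (1 / (2 * pi) ^ CARD('n)) *
     (\<Sum>\<^sub>\<infinity>l\<in>UNIV. integral (cbox (\<chi> i. - pi) (\<chi> i. pi))
        (\<lambda>\<xi>. exp (\<i> * complex_of_real (((lat \<epsilon> l - lat \<epsilon> k) \<bullet> \<xi>) / \<epsilon>)) * a (lat \<epsilon> k) \<xi> \<epsilon> * v l))"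

definition wmon :: "real \<Rightarrow> ('n::finite \<Rightarrow> nat) \<Rightarrow> (int^'n \<Rightarrow> complex) \<Rightarrow> int^'n \<Rightarrow> real" where
  "wmon \<epsilon> \<alpha> u k = norm (complex_of_real (\<Prod>i\<in>UNIV. (lat \<epsilon> k $ i) ^ \<alpha> i) * u k)"

definition seminorm_s :: "real \<Rightarrow> ('n::finite \<Rightarrow> nat) \<Rightarrow> (int^'n \<Rightarrow> complex) \<Rightarrow> real" where
  "seminorm_s \<epsilon> \<alpha> u = (SUP k. wmon \<epsilon> \<alpha> u k)"

definition s_space :: "real \<Rightarrow> (int^'n::finite \<Rightarrow> complex) set" where
  "s_space \<epsilon> = {u. \<forall>\<alpha>. bdd_above (range (wmon \<epsilon> \<alpha> u))}"

definition s_topology :: "real \<Rightarrow> (int^'n::finite \<Rightarrow> complex) topology" where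
  "s_topology \<epsilon> = topology (\<lambda>U. U \<subseteq> s_space \<epsilon> \<and>
     (\<forall>u\<in>U. \<exists>F r. finite F \<and> r > 0 \<and>
        {v \<in> s_space \<epsilon>. \<forall>\<alpha>\<in>F. seminorm_s \<epsilon> \<alpha> (v - u) < r} \<subseteq> U))"

end

theory Submission
  imports Defs
begin

definition Tdiff :: "real \<Rightarrow> 'a::real_normed_vector \<Rightarrow> ('a \<Rightarrow> complex) \<Rightarrow> 'a \<Rightarrow> complex" where
  "Tdiff h w G z = (G z - G (z + h *\<^sub>R w)) / 2"

lemma Tdiff_has_derivative:
  assumes "(G has_derivative G1) (at z)" "(G has_derivative G2) (at (z + h *\<^sub>R w))"
  shows "(Tdiff h w G has_derivative (\<lambda>v. (G1 v - G2 v) / 2)) (at z)"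
proof -
  have s: "((\<lambda>y. y + h *\<^sub>R w) has_derivative (\<lambda>v. v)) (at z)"
    by (auto intro!: derivative_eq_intros)
  have "((\<lambda>y. G (y + h *\<^sub>R w)) has_derivative G2) (at z)"
    using has_derivative_compose[OF s assms(2)] by simp
  then have "((\<lambda>y. G y - G (y + h *\<^sub>R w)) has_derivative (\<lambda>v. G1 v - G2 v)) (at z)"
    using assms(1) by (rule has_derivative_diff[rotated])
  then have "((\<lambda>y. (G y - G (y + h *\<^sub>R w)) / 2) has_derivative (\<lambda>v. (G1 v - G2 v) / 2)) (at z)"
    using bounded_linear.has_derivative[OF bounded_linear_divide[of 2]] by blast
  then show ?thesis unfolding Tdiff_def[abs_def] by simp
qed

lemma Tdiff_differentiable:
  assumes "\<forall>y. G differentiable (at y)"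
  shows "Tdiff h w G differentiable (at z)"
proof -
  have "(G has_derivative frechet_derivative G (at z)) (at z)" "(G has_derivative frechet_derivative G (at (z + h *\<^sub>R w))) (at (z + h *\<^sub>R w))"
    using assms frechet_derivative_works by blast+
  from Tdiff_has_derivative[OF this] show ?thesis unfolding differentiable_def by blast
qed

lemma dd_Tdiff_1:
  assumes "\<forall>y. G differentiable (at y)"
  shows "dd [w] (Tdiff h w G) = Tdiff h w (dd [w] G)"
proof
  fix z
  have d: "(Tdiff h w G has_derivative (\<lambda>v. (frechet_derivative G (at z) v - frechet_derivative G (at (z + h *\<^sub>R w)) v) / 2)) (at z)"
    by (rule Tdiff_has_derivative) (use assms frechet_derivative_works in blast)+
  show "dd [w] (Tdiff h w G) z = Tdiff h w (dd [w] G) z"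
    unfolding dd.simps frechet_derivative_at[OF d, symmetric] by (simp add: Tdiff_def)
qed

lemma dd_rep_Tdiff:
  assumes "\<forall>j y. dd (replicate j w) G differentiable (at y)"
  shows "dd (replicate j w) (Tdiff h w G) = Tdiff h w (dd (replicate j w) G)"
proof (induction j)
  case 0
  then show ?case by simp
next
  case (Suc j)
  have "dd (replicate (Suc j) w) (Tdiff h w G) = dd [w] (dd (replicate j w) (Tdiff h w G))"
    by simp
  also have "\<dots> = dd [w] (Tdiff h w (dd (replicate j w) G))" using Suc by simp
  also have "\<dots> = Tdiff h w (dd [w] (dd (replicate j w) G))"
    by (rule dd_Tdiff_1) (use assms in blast)
  also have "dd [w] (dd (replicate j w) G) = dd (replicate (Suc j) w) G" by simp
  finally show ?case .
qed

lemma smooth_Tdiff: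
  assumes "\<forall>j y. dd (replicate j w) G differentiable (at y)"
  shows "\<forall>j y. dd (replicate j w) (Tdiff h w G) differentiable (at y)"
proof (intro allI)
  fix j y
  show "dd (replicate j w) (Tdiff h w G) differentiable (at y)"
    unfolding dd_rep_Tdiff[OF assms] by (rule Tdiff_differentiable) (use assms in blast)
qed

lemma Tdiff_bound:
  assumes "\<forall>y. G differentiable (at y)" "\<forall>t. norm (dd [w] G (z + t *\<^sub>R w)) \<le> B"
  shows "norm (Tdiff h w G z) \<le> \<bar>h\<bar> / 2 * B"
proof -
  define f where "f t = G (z + t *\<^sub>R w)" for t
  have der: "(f has_derivative (\<lambda>s. s *\<^sub>R dd [w] G (z + t *\<^sub>R w))) (at t within UNIV)" for t
  proof -
    have s: "((\<lambda>t. z + t *\<^sub>R w) has_derivative (\<lambda>s. s *\<^sub>R w)) (at t)"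
      by (auto intro!: derivative_eq_intros)
    have g: "(G has_derivative frechet_derivative G (at (z + t *\<^sub>R w))) (at (z + t *\<^sub>R w))"
      using assms(1) frechet_derivative_works by blast
    have lin: "linear (frechet_derivative G (at (z + t *\<^sub>R w)))"
      using g has_derivative_linear by blast
    show ?thesis
      using has_derivative_compose[OF s g] unfolding f_def
      by (simp add: linear_cmul[OF lin])
  qed
  have on: "onorm (\<lambda>s. s *\<^sub>R dd [w] G (z + t *\<^sub>R w)) \<le> B" for t
  proof -
    have "onorm (\<lambda>s::real. s *\<^sub>R dd [w] G (z + t *\<^sub>R w)) = norm (dd [w] G (z + t *\<^sub>R w))"
      using onorm_scaleR_left[OF bounded_linear_ident, of "dd [w] G (z + t *\<^sub>R w)"] by (simp add: onorm_id)
    then show ?thesis using assms(2) by simp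
  qed
  have "norm (f 0 - f h) \<le> B * norm (0 - h)"
    by (rule differentiable_bound[OF convex_UNIV der on]) auto
  then show ?thesis unfolding Tdiff_def f_def by (simp add: norm_divide mult.commute)
qed

lemma Tdiff_iter_bound:
  assumes "\<forall>j y. dd (replicate j w) G differentiable (at y)"
    "\<forall>t. norm (dd (replicate M w) G (z + t *\<^sub>R w)) \<le> B"
  shows "norm (((Tdiff h w)^^M) G z) \<le> (\<bar>h\<bar>/2)^M * B"
  using assms
proof (induction M arbitrary: G B)
  case 0
  from 0(2)[rule_format, of 0] show ?case by simp
next
  case (Suc M)
  have eq: "((Tdiff h w)^^(Suc M)) G = ((Tdiff h w)^^M) (Tdiff h w G)"
    by (simp only: funpow_Suc_right o_def)
  have sm: "\<forall>j y. dd (replicate j w) (Tdiff h w G) differentiable (at y)"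
    by (rule smooth_Tdiff[OF Suc.prems(1)])
  have bd: "\<forall>t. norm (dd (replicate M w) (Tdiff h w G) (z + t *\<^sub>R w)) \<le> \<bar>h\<bar>/2 * B"
  proof
    fix t
    have "dd (replicate M w) (Tdiff h w G) (z + t *\<^sub>R w) = Tdiff h w (dd (replicate M w) G) (z + t *\<^sub>R w)"
      using dd_rep_Tdiff[OF Suc.prems(1)] by simp
    also have "norm \<dots> \<le> \<bar>h\<bar>/2 * B"
    proof (rule Tdiff_bound)
      show "\<forall>y. dd (replicate M w) G differentiable (at y)" using Suc.prems(1) by blast
      show "\<forall>s. norm (dd [w] (dd (replicate M w) G) (z + t *\<^sub>R w + s *\<^sub>R w)) \<le> B"
      proof
        fix s
        have "dd [w] (dd (replicate M w) G) (z + t *\<^sub>R w + s *\<^sub>R w) = dd (replicate (Suc M) w) G (z + (t + s) *\<^sub>R w)"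
          by (simp add: scaleR_add_left add.assoc)
        then show "norm (dd [w] (dd (replicate M w) G) (z + t *\<^sub>R w + s *\<^sub>R w)) \<le> B"
          using Suc.prems(2) by metis
      qed
    qed
    finally show "norm (dd (replicate M w) (Tdiff h w G) (z + t *\<^sub>R w)) \<le> \<bar>h\<bar>/2 * B" .
  qed
  have "norm (((Tdiff h w)^^M) (Tdiff h w G) z) \<le> (\<bar>h\<bar>/2)^M * (\<bar>h\<bar>/2 * B)"
    by (rule Suc.IH[OF sm bd])
  then show ?case unfolding eq by (simp add: mult_ac)
qed


lemma periodic_shift_integral:
  fixes \<phi> :: "real^'n \<Rightarrow> complex"
  assumes cont: "continuous_on UNIV \<phi>" and per: "\<forall>\<xi>. \<phi> (\<xi> + axis i (2*pi)) = \<phi> \<xi>"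
    and h: "0 \<le> h" "h \<le> 2*pi"
  shows "integral (cbox (\<chi> _. -pi) (\<chi> _. pi)) (\<lambda>\<xi>. \<phi> (\<xi> + axis i h)) = integral (cbox (\<chi> _. -pi) (\<chi> _. pi)) \<phi>"
proof -
  define a :: "real^'n" where "a = (\<chi> _. -pi)"
  define b :: "real^'n" where "b = (\<chi> _. pi)"
  define c :: "real^'n" where "c = axis i h"
  define e :: "real^'n" where "e = axis i (2*pi)"
  define b1 :: "real^'n" where "b1 = (\<chi> j. if j = i then -pi + h else pi)"
  define k :: "real^'n" where "k = axis i 1"
  have k: "k \<in> Basis" unfolding k_def by simp
  have int: "\<phi> integrable_on cbox u v" for u v
    by (rule integrable_continuous) (rule continuous_on_subset[OF cont], simp)
  have ik: "x \<bullet> k = x $ i" for x :: "real^'n" unfolding k_def by (simp add: inner_axis)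
  have "integral (cbox a b) (\<lambda>\<xi>. \<phi> (\<xi> + c)) = integral (cbox a b) (\<phi> \<circ> (+) c)"
    by (simp add: o_def add.commute)
  also have "\<dots> = integral (cbox (a+c) (b+c)) \<phi>" by (rule integral_shift_cbox_plus)
  also have "\<dots> = integral (cbox (a+c) (b+c) \<inter> {x. x\<bullet>k \<le> pi}) \<phi> + integral (cbox (a+c) (b+c) \<inter> {x. x\<bullet>k \<ge> pi}) \<phi>"
    by (rule integral_split[OF int k])
  also have "cbox (a+c) (b+c) \<inter> {x. x\<bullet>k \<le> pi} = cbox a b \<inter> {x. x\<bullet>k \<ge> -pi + h}"
    using h unfolding ik
    by (auto simp: mem_box_cart a_def b_def c_def axis_def split: if_splits; smt (verit) pi_gt_zero)+
  also have "cbox (a+c) (b+c) \<inter> {x. x\<bullet>k \<ge> pi} = cbox (a+e) (b1+e)"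
    using h unfolding ik
    by (auto simp: mem_box_cart a_def b_def c_def e_def b1_def axis_def split: if_splits; smt (verit) pi_gt_zero)+
  also have "integral (cbox (a+e) (b1+e)) \<phi> = integral (cbox a b1) (\<phi> \<circ> (+) e)"
    by (rule integral_shift_cbox_plus[symmetric])
  also have "\<phi> \<circ> (+) e = \<phi>" using per unfolding e_def by (simp add: o_def add.commute fun_eq_iff)
  also have "cbox a b1 = cbox a b \<inter> {x. x\<bullet>k \<le> -pi + h}"
    using h unfolding ik
    by (auto simp: mem_box_cart a_def b_def b1_def split: if_splits; smt (verit) pi_gt_zero)+
  also have "integral (cbox a b \<inter> {x. x\<bullet>k \<ge> -pi + h}) \<phi> + integral (cbox a b \<inter> {x. x\<bullet>k \<le> -pi + h}) \<phi>
      = integral (cbox a b) \<phi>"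
    using integral_split[OF int k, of a b "-pi + h"] by simp
  finally show ?thesis unfolding a_def b_def c_def .
qed


lemma axis_scale: "h *\<^sub>R axis i (1::real) = axis i h"
  by (simp add: vec_eq_iff axis_def)

lemma dr_inner_axis: "(\<chi> j. real_of_int (dz $ j)) \<bullet> (\<xi> + axis i t) = (\<chi> j. real_of_int (dz $ j)) \<bullet> \<xi> + real_of_int (dz $ i) * t"
  by (simp add: inner_add_right inner_axis)

definition Eexp :: "int^'n \<Rightarrow> real^'n \<Rightarrow> complex" where
  "Eexp dz \<xi> = exp (\<i> * complex_of_real ((\<chi> j. real_of_int (dz $ j)) \<bullet> \<xi>))"

lemma Eexp_shift: "Eexp dz (\<xi> + axis i t) = Eexp dz \<xi> * exp (\<i> * complex_of_real (real_of_int (dz $ i) * t))"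
  unfolding Eexp_def dr_inner_axis by (simp add: distrib_left exp_add)

lemma Eexp_period: "Eexp dz (\<xi> + axis i (2*pi)) = Eexp dz \<xi>"
proof -
  have "exp (\<i> * complex_of_real (real_of_int (dz $ i) * (2*pi))) = 1"
    using exp_2pi_1_int[of "dz $ i"] by (simp add: mult_ac)
  then show ?thesis by (simp add: Eexp_shift)
qed

lemma Eexp_half: assumes "dz $ i \<noteq> 0"
  shows "Eexp dz (\<xi> + axis i (pi / \<bar>real_of_int (dz $ i)\<bar>)) = - Eexp dz \<xi>"
proof -
  have "real_of_int (dz $ i) * (pi / \<bar>real_of_int (dz $ i)\<bar>) = pi \<or> real_of_int (dz $ i) * (pi / \<bar>real_of_int (dz $ i)\<bar>) = - pi"
    using assms by (cases "dz $ i > 0") auto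
  then have "exp (\<i> * complex_of_real (real_of_int (dz $ i) * (pi / \<bar>real_of_int (dz $ i)\<bar>))) = -1"
  proof
    assume "real_of_int (dz $ i) * (pi / \<bar>real_of_int (dz $ i)\<bar>) = pi"
    then show ?thesis by simp
  next
    assume a: "real_of_int (dz $ i) * (pi / \<bar>real_of_int (dz $ i)\<bar>) = - pi"
    have "exp (\<i> * complex_of_real (- pi)) = exp (- (\<i> * complex_of_real pi))" by simp
    also have "\<dots> = inverse (exp (\<i> * complex_of_real pi))" by (rule exp_minus)
    also have "\<dots> = -1" by simp
    finally show ?thesis unfolding a .
  qed
  then show ?thesis by (simp add: Eexp_shift)
qed

lemma Eexp_cont: "continuous_on UNIV (Eexp dz)"
  unfolding Eexp_def by (intro continuous_intros)

lemma norm_Eexp [simp]: "norm (Eexp dz \<xi>) = 1"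
  unfolding Eexp_def by simp

definition Sbox :: "(real^'n) set" where "Sbox = cbox (\<chi> _. -pi) (\<chi> _. pi)"

lemma smooth_cont:
  assumes "\<forall>j y. dd (replicate j w) G differentiable (at y)"
  shows "continuous_on UNIV G"
proof -
  have "\<forall>y. G differentiable (at y)" using assms[rule_format, of 0] by simp
  then show ?thesis by (simp add: continuous_at_imp_continuous_on differentiable_imp_continuous_within)
qed

lemma cont_slice:
  fixes G :: "(real^'n) \<times> (real^'n) \<Rightarrow> complex"
  assumes "continuous_on UNIV G"
  shows "continuous_on UNIV (\<lambda>\<xi>. G (x, \<xi>))"
  by (rule continuous_on_compose2[OF assms]) (auto intro!: continuous_intros)

lemma step_identity:
  fixes G :: "(real^'n) \<times> (real^'n) \<Rightarrow> complex"
  assumes sm: "\<forall>j y. dd (replicate j w) G differentiable (at y)"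
    and per: "\<forall>z. G (z + (0, axis i (2*pi))) = G z"
    and w: "w = (0, axis i 1)" and dz: "dz $ i \<noteq> 0" and h: "h = pi / \<bar>real_of_int (dz $ i)\<bar>"
  shows "integral Sbox (\<lambda>\<xi>. Eexp dz \<xi> * G (x, \<xi>)) = integral Sbox (\<lambda>\<xi>. Eexp dz \<xi> * Tdiff h w G (x, \<xi>))"
proof -
  define \<phi> where "\<phi> \<xi> = Eexp dz \<xi> * G (x, \<xi>)" for \<xi>
  have cG: "continuous_on UNIV (\<lambda>\<xi>. G (x, \<xi>))" by (rule cont_slice[OF smooth_cont[OF sm]])
  have c\<phi>: "continuous_on UNIV \<phi>" unfolding \<phi>_def by (intro continuous_intros Eexp_cont cG)
  have p\<phi>: "\<forall>\<xi>. \<phi> (\<xi> + axis i (2*pi)) = \<phi> \<xi>"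
    using per[rule_format, of "(x, _)"] by (simp add: \<phi>_def Eexp_period)
  have h1: "1 \<le> \<bar>real_of_int (dz $ i)\<bar>" using dz by linarith
  have h0: "0 \<le> h" "h \<le> 2*pi" unfolding h using h1 pi_gt_zero
  proof -
    have "pi / \<bar>real_of_int (dz $ i)\<bar> \<le> pi / 1"
      by (rule divide_left_mono) (use h1 pi_gt_zero in auto)
    then have hp: "pi / \<bar>real_of_int (dz $ i)\<bar> \<le> pi" by simp
    show "0 \<le> pi / \<bar>real_of_int (dz $ i)\<bar>" using pi_gt_zero by simp
    show "pi / \<bar>real_of_int (dz $ i)\<bar> \<le> 2 * pi" using hp pi_gt_zero by linarith
  qed
  have sh: "integral Sbox (\<lambda>\<xi>. \<phi> (\<xi> + axis i h)) = integral Sbox \<phi>"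
    unfolding Sbox_def by (rule periodic_shift_integral[OF c\<phi> p\<phi> h0])
  have int1: "\<phi> integrable_on Sbox" unfolding Sbox_def
    by (rule integrable_continuous) (rule continuous_on_subset[OF c\<phi>], simp)
  have c2: "continuous_on UNIV (\<lambda>\<xi>. \<phi> (\<xi> + axis i h))"
    by (rule continuous_on_compose2[OF c\<phi>]) (auto intro!: continuous_intros)
  have int2: "(\<lambda>\<xi>. \<phi> (\<xi> + axis i h)) integrable_on Sbox" unfolding Sbox_def
    by (rule integrable_continuous) (rule continuous_on_subset[OF c2], simp)
  have eq: "Eexp dz \<xi> * Tdiff h w G (x, \<xi>) = (\<phi> \<xi> + \<phi> (\<xi> + axis i h)) * (1/2)" for \<xi>
  proof -
    have "(x, \<xi>) + h *\<^sub>R w = (x, \<xi> + axis i h)" unfolding w by (simp add: axis_scale)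
    moreover have "Eexp dz (\<xi> + axis i h) = - Eexp dz \<xi>" using Eexp_half[OF dz, of \<xi>] unfolding h[symmetric] .
    ultimately show ?thesis
      unfolding Tdiff_def \<phi>_def by (simp add: field_simps)
  qed
  have "integral Sbox (\<lambda>\<xi>. Eexp dz \<xi> * Tdiff h w G (x, \<xi>)) = (integral Sbox \<phi> + integral Sbox (\<lambda>\<xi>. \<phi> (\<xi> + axis i h))) * (1/2)"
    unfolding eq by (simp add: integral_add[OF int1 int2])
  also have "\<dots> = integral Sbox \<phi>" unfolding sh by simp
  finally show ?thesis unfolding \<phi>_def by simp
qed

lemma smooth_iter:
  assumes "\<forall>j y. dd (replicate j w) G differentiable (at y)"
  shows "\<forall>j y. dd (replicate j w) (((Tdiff h w)^^M) G) differentiable (at y)"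
proof (induction M)
  case 0 then show ?case using assms by simp
next
  case (Suc M) then show ?case using smooth_Tdiff[OF Suc.IH] by simp
qed

lemma per_iter:
  assumes "\<forall>z. G (z + p) = G z"
  shows "\<forall>z. ((Tdiff h w)^^M) G (z + p) = ((Tdiff h w)^^M) G z"
proof (induction M)
  case 0 then show ?case using assms by simp
next
  case (Suc M)
  show ?case
  proof
    fix z
    have zz: "z + p + h *\<^sub>R w = (z + h *\<^sub>R w) + p" by (simp add: add_ac)
    define Q where "Q = ((Tdiff h w)^^M) G"
    have e: "((Tdiff h w)^^Suc M) G y = (Q y - Q (y + h *\<^sub>R w)) / 2" for y
      unfolding Q_def by (simp add: Tdiff_def)
    have q1: "Q (z + p) = Q z" using Suc unfolding Q_def by blast
    have "Q (z + h *\<^sub>R w + p) = Q (z + h *\<^sub>R w)" using Suc unfolding Q_def by blast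
    then have q2: "Q (z + p + h *\<^sub>R w) = Q (z + h *\<^sub>R w)" unfolding zz .
    show "((Tdiff h w)^^Suc M) G (z + p) = ((Tdiff h w)^^Suc M) G z"
      unfolding e q1 q2 ..
  qed
qed

lemma iter_identity:
  fixes G :: "(real^'n) \<times> (real^'n) \<Rightarrow> complex"
  assumes sm: "\<forall>j y. dd (replicate j w) G differentiable (at y)"
    and per: "\<forall>z. G (z + (0, axis i (2*pi))) = G z"
    and w: "w = (0, axis i 1)" and dz: "dz $ i \<noteq> 0" and h: "h = pi / \<bar>real_of_int (dz $ i)\<bar>"
  shows "integral Sbox (\<lambda>\<xi>. Eexp dz \<xi> * G (x, \<xi>)) = integral Sbox (\<lambda>\<xi>. Eexp dz \<xi> * ((Tdiff h w)^^M) G (x, \<xi>))"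
proof (induction M)
  case 0 then show ?case by simp
next
  case (Suc M)
  have "integral Sbox (\<lambda>\<xi>. Eexp dz \<xi> * ((Tdiff h w)^^M) G (x, \<xi>)) = integral Sbox (\<lambda>\<xi>. Eexp dz \<xi> * Tdiff h w (((Tdiff h w)^^M) G) (x, \<xi>))"
    by (rule step_identity[OF smooth_iter[OF sm] per_iter[OF per] w dz h])
  then show ?case using Suc by simp
qed

lemma kernel_bound_M:
  fixes G :: "(real^'n) \<times> (real^'n) \<Rightarrow> complex"
  assumes sm: "\<forall>j y. dd (replicate j w) G differentiable (at y)"
    and per: "\<forall>z. G (z + (0, axis i (2*pi))) = G z"
    and w: "w = (0, axis i 1)" and dz: "dz $ i \<noteq> 0"
    and bd: "\<forall>\<xi>. norm (dd (replicate M w) G (x, \<xi>)) \<le> B"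
  shows "norm (integral Sbox (\<lambda>\<xi>. Eexp dz \<xi> * G (x, \<xi>))) \<le> (pi / (2 * \<bar>real_of_int (dz $ i)\<bar>))^M * B * measure lborel (Sbox :: (real^'n) set)"
proof -
  define h where "h = pi / \<bar>real_of_int (dz $ i)\<bar>"
  define H where "H = ((Tdiff h w)^^M) G"
  have B0: "0 \<le> B" using bd norm_ge_zero order_trans by blast
  have hb: "norm (H (x, \<xi>)) \<le> (\<bar>h\<bar>/2)^M * B" for \<xi>
    unfolding H_def
  proof (rule Tdiff_iter_bound[OF sm])
    show "\<forall>t. norm (dd (replicate M w) G ((x, \<xi>) + t *\<^sub>R w)) \<le> B"
      using bd unfolding w by simp
  qed
  have cH: "continuous_on UNIV (\<lambda>\<xi>. Eexp dz \<xi> * H (x, \<xi>))"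
    unfolding H_def by (intro continuous_intros Eexp_cont cont_slice smooth_cont[OF smooth_iter[OF sm]])
  have int: "((\<lambda>\<xi>. Eexp dz \<xi> * H (x, \<xi>)) has_integral integral Sbox (\<lambda>\<xi>. Eexp dz \<xi> * H (x, \<xi>))) Sbox"
    unfolding Sbox_def
    by (rule integrable_integral, rule integrable_continuous) (rule continuous_on_subset[OF cH], simp)
  have "norm (integral Sbox (\<lambda>\<xi>. Eexp dz \<xi> * H (x, \<xi>))) \<le> (\<bar>h\<bar>/2)^M * B * measure lborel (Sbox :: (real^'n) set)"
    unfolding Sbox_def
    by (rule has_integral_bound[OF _ int[unfolded Sbox_def]]) (use B0 hb in \<open>auto simp: norm_mult\<close>)
  moreover have "\<bar>h\<bar>/2 = pi / (2 * \<bar>real_of_int (dz $ i)\<bar>)" unfolding h_def by simp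
  ultimately show ?thesis
    using iter_identity[OF sm per w dz h_def, of x M] unfolding H_def by simp
qed


definition Kern :: "real \<Rightarrow> (real^'n \<Rightarrow> real^'n \<Rightarrow> real \<Rightarrow> complex) \<Rightarrow> int^'n \<Rightarrow> int^'n \<Rightarrow> complex" where
  "Kern \<epsilon> a k l = integral Sbox (\<lambda>\<xi>. exp (\<i> * complex_of_real (((lat \<epsilon> l - lat \<epsilon> k) \<bullet> \<xi>) / \<epsilon>)) * a (lat \<epsilon> k) \<xi> \<epsilon>)"

lemma lat_diff: "lat \<epsilon> l - lat \<epsilon> k = \<epsilon> *\<^sub>R (\<chi> j. real_of_int ((l - k) $ j))"
  by (simp add: lat_def vec_eq_iff algebra_simps)

lemma Kern_Eexp:
  assumes "\<epsilon> \<noteq> 0"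
  shows "Kern \<epsilon> a k l = integral Sbox (\<lambda>\<xi>. Eexp (l - k) \<xi> * (\<lambda>z. a (fst z) (snd z) \<epsilon>) (lat \<epsilon> k, \<xi>))"
  unfolding Kern_def Eexp_def lat_diff using assms by simp

lemma w_Basis: "((0::real^'n), axis i (1::real)) \<in> (Basis :: ((real^'n) \<times> (real^'n)) set)"
  by (simp add: Basis_prod_def)

lemma kernel_bound_0:
  fixes G :: "(real^'n) \<times> (real^'n) \<Rightarrow> complex"
  assumes c: "continuous_on UNIV G" and bd: "\<forall>\<xi>. norm (G (x, \<xi>)) \<le> B"
  shows "norm (integral Sbox (\<lambda>\<xi>. Eexp dz \<xi> * G (x, \<xi>))) \<le> B * measure lborel (Sbox :: (real^'n) set)"
proof -
  have B0: "0 \<le> B" using bd norm_ge_zero order_trans by blast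
  have cH: "continuous_on UNIV (\<lambda>\<xi>. Eexp dz \<xi> * G (x, \<xi>))"
    by (intro continuous_intros Eexp_cont cont_slice c)
  have int: "((\<lambda>\<xi>. Eexp dz \<xi> * G (x, \<xi>)) has_integral integral Sbox (\<lambda>\<xi>. Eexp dz \<xi> * G (x, \<xi>))) Sbox"
    unfolding Sbox_def
    by (rule integrable_integral, rule integrable_continuous) (rule continuous_on_subset[OF cH], simp)
  show ?thesis
    unfolding Sbox_def
    by (rule has_integral_bound[OF _ int[unfolded Sbox_def]]) (use B0 bd in \<open>auto simp: norm_mult\<close>)
qed

lemma kernel_decay:
  fixes m :: "real^'n \<Rightarrow> real^'n \<Rightarrow> real" and a :: "real^'n \<Rightarrow> real^'n \<Rightarrow> real \<Rightarrow> complex"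
  assumes om: "\<forall>x y \<xi> \<eta>. m x \<xi> \<le> C0 * jbr (x - y) powr N1 * m y \<eta>" and m0: "\<forall>x \<xi>. 0 \<le> m x \<xi>"
    and sc: "symbol_class 0 \<delta> m a" and e: "0 < \<epsilon>" "\<epsilon> \<le> 1"
  shows "\<exists>C\<ge>0. \<forall>k l. \<bar>real_of_int ((l - k) $ i)\<bar> ^ M * norm (Kern \<epsilon> a k l) \<le> C * jbr (lat \<epsilon> k) powr N1"
proof -
  define w :: "(real^'n) \<times> (real^'n)" where "w = (0, axis i 1)"
  define F where "F z = a (fst z) (snd z) \<epsilon>" for z
  have eI: "\<epsilon> \<in> {0<..1}" using e by simp
  have Feq: "(\<lambda>z. a (fst z) (snd z) \<epsilon>) = F" by (simp add: F_def fun_eq_iff)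
  have KF: "Kern \<epsilon> a k l = integral Sbox (\<lambda>\<xi>. Eexp (l - k) \<xi> * F (lat \<epsilon> k, \<xi>))" for k l
    unfolding Kern_def Eexp_def lat_diff F_def using e by simp
  have sm0: "smooth_fun F" and per0: "periodic_xi (\<lambda>x \<xi>. a x \<xi> \<epsilon>)"
    using sc eI unfolding symbol_class_def F_def by blast+
  have wB: "w \<in> Basis" unfolding w_def by (rule w_Basis)
  have sm: "\<forall>j y. dd (replicate j w) F differentiable (at y)"
  proof (intro allI)
    fix j y
    have "set (replicate j w) \<subseteq> Basis" using wB by auto
    then show "dd (replicate j w) F differentiable (at y)" using sm0 unfolding smooth_fun_def by blast
  qed
  have per: "\<forall>z. F (z + (0, axis i (2*pi))) = F z"
    using per0 unfolding periodic_xi_def F_def by simp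
  obtain C where C: "\<forall>\<epsilon>\<in>{0<..1}. \<forall>x \<xi>. norm (dd (replicate M w) (\<lambda>z. a (fst z) (snd z) \<epsilon>) (x, \<xi>))
             \<le> C * m x \<xi> * \<epsilon> powr (0 - \<delta> * real (length (replicate M w)))"
  proof -
    have "set (replicate M w) \<subseteq> Basis" using wB by auto
    then show ?thesis using sc that unfolding symbol_class_def by blast
  qed
  define B where "B (x::real^'n) = \<bar>C\<bar> * (\<bar>C0\<bar> * jbr x powr N1 * m 0 0) * \<epsilon> powr (- \<delta> * M)" for x
  have mb: "m x \<xi> \<le> \<bar>C0\<bar> * jbr x powr N1 * m 0 0" for x \<xi>
  proof -
    have "m x \<xi> \<le> C0 * jbr (x - 0) powr N1 * m 0 0" using om by blast
    also have "\<dots> \<le> \<bar>C0\<bar> * jbr x powr N1 * m 0 0"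
    proof (rule mult_right_mono)
      show "C0 * jbr (x - 0) powr N1 \<le> \<bar>C0\<bar> * jbr x powr N1"
        by (simp add: mult_right_mono)
    qed (use m0 in auto)
    finally show ?thesis .
  qed
  have bd: "norm (dd (replicate M w) F (x, \<xi>)) \<le> B x" for x \<xi>
  proof -
    have "norm (dd (replicate M w) F (x, \<xi>)) \<le> C * m x \<xi> * \<epsilon> powr (- \<delta> * M)"
      using C[rule_format, OF eI, of x \<xi>] unfolding Feq by simp
    also have "\<dots> \<le> \<bar>C\<bar> * m x \<xi> * \<epsilon> powr (- \<delta> * M)"
      by (rule mult_right_mono[OF mult_right_mono[OF abs_ge_self]]) (use m0 in auto)
    also have "\<dots> \<le> B x" unfolding B_def
      using mb[of x \<xi>] by (intro mult_right_mono mult_left_mono) auto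
    finally show ?thesis .
  qed
  have bd0: "norm (F (x, \<xi>)) \<le> \<bar>C'\<bar> * (\<bar>C0\<bar> * jbr x powr N1 * m 0 0)" if
    "\<forall>x \<xi>. norm (F (x, \<xi>)) \<le> C' * m x \<xi>" for x \<xi> C'
  proof -
    have "norm (F (x, \<xi>)) \<le> C' * m x \<xi>" using that by blast
    also have "\<dots> \<le> \<bar>C'\<bar> * m x \<xi>" by (rule mult_right_mono[OF abs_ge_self]) (use m0 in auto)
    also have "\<dots> \<le> \<bar>C'\<bar> * (\<bar>C0\<bar> * jbr x powr N1 * m 0 0)" by (rule mult_left_mono[OF mb]) simp
    finally show ?thesis .
  qed
  define meas where "meas = measure lborel (Sbox :: (real^'n) set)"
  have meas0: "0 \<le> meas" unfolding meas_def by simp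
  show ?thesis
  proof (cases M)
    case 0
    obtain C' where C': "\<forall>\<epsilon>\<in>{0<..1}. \<forall>x \<xi>. norm (dd [] (\<lambda>z. a (fst z) (snd z) \<epsilon>) (x, \<xi>))
             \<le> C' * m x \<xi> * \<epsilon> powr (0 - \<delta> * real (length ([]::((real^'n) \<times> (real^'n)) list)))"
    proof -
      have "set ([]::((real^'n) \<times> (real^'n)) list) \<subseteq> Basis" by simp
      then show ?thesis using sc that unfolding symbol_class_def by blast
    qed
    have C'': "\<forall>x \<xi>. norm (F (x, \<xi>)) \<le> C' * m x \<xi>" using C'[rule_format, OF eI] e unfolding Feq by simp
    define D where "D = \<bar>C'\<bar> * \<bar>C0\<bar> * m 0 0 * meas"
    show ?thesis
    proof (intro exI[of _ D] conjI allI)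
      show "0 \<le> D" unfolding D_def using m0 meas0 by (intro mult_nonneg_nonneg) auto
      fix k l
      have "norm (Kern \<epsilon> a k l) \<le> (\<bar>C'\<bar> * (\<bar>C0\<bar> * jbr (lat \<epsilon> k) powr N1 * m 0 0)) * meas"
        unfolding KF meas_def
        by (rule kernel_bound_0[OF smooth_cont[OF sm]]) (intro allI bd0[OF C''])
      moreover have "(\<bar>C'\<bar> * (\<bar>C0\<bar> * jbr (lat \<epsilon> k) powr N1 * m 0 0)) * meas = D * jbr (lat \<epsilon> k) powr N1"
        unfolding D_def by (simp only: mult_ac)
      ultimately show "\<bar>real_of_int ((l - k) $ i)\<bar> ^ M * norm (Kern \<epsilon> a k l) \<le> D * jbr (lat \<epsilon> k) powr N1"
        unfolding 0 by simp
    qed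
  next
    case (Suc M')
    define D where "D = (pi/2)^M * \<bar>C\<bar> * \<bar>C0\<bar> * m 0 0 * \<epsilon> powr (- \<delta> * M) * meas"
    show ?thesis
    proof (intro exI[of _ D] conjI allI)
      show "0 \<le> D" unfolding D_def using m0 meas0 by (intro mult_nonneg_nonneg) auto
      fix k l
      show "\<bar>real_of_int ((l - k) $ i)\<bar> ^ M * norm (Kern \<epsilon> a k l) \<le> D * jbr (lat \<epsilon> k) powr N1"
      proof (cases "(l - k) $ i = 0")
        case True
        have "0 \<le> D * jbr (lat \<epsilon> k) powr N1" using \<open>0 \<le> D\<close> by simp
        then show ?thesis using True Suc by simp
      next
        case False
        define t where "t = \<bar>real_of_int ((l - k) $ i)\<bar>"
        have t0: "0 < t" unfolding t_def using False by simp
        have "norm (Kern \<epsilon> a k l) \<le> (pi / (2 * t))^M * B (lat \<epsilon> k) * meas"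
          unfolding KF meas_def t_def
          by (rule kernel_bound_M[OF sm per w_def False]) (intro allI bd)
        then have "t ^ M * norm (Kern \<epsilon> a k l) \<le> t ^ M * ((pi / (2 * t))^M * B (lat \<epsilon> k) * meas)"
          using t0 by (intro mult_left_mono) auto
        also have "t ^ M * ((pi / (2 * t))^M * B (lat \<epsilon> k) * meas) = (t * (pi / (2 * t)))^M * B (lat \<epsilon> k) * meas"
          by (simp only: power_mult_distrib mult.assoc)
        also have "(t * (pi / (2 * t)))^M * B (lat \<epsilon> k) * meas = (pi / 2)^M * B (lat \<epsilon> k) * meas"
          using t0 by simp
        also have "\<dots> = D * jbr (lat \<epsilon> k) powr N1" unfolding D_def B_def by (simp only: mult_ac)
        finally show ?thesis unfolding t_def .
      qed
    qed
  qed
qed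


definition Wk :: "int^'n \<Rightarrow> real" where
  "Wk d = (\<Prod>i\<in>UNIV. 1 + \<bar>real_of_int (d $ i)\<bar>)"

lemma Wk_ge1: "1 \<le> Wk d"
  unfolding Wk_def by (rule prod_ge_1) auto

lemma Wk_pos: "0 < Wk d"
  using Wk_ge1[of d] by linarith

lemma Wk_minus: "Wk (- d) = Wk d"
  unfolding Wk_def by simp

lemma Wk_add: "Wk (a + b) \<le> Wk a * Wk b"
proof -
  have "Wk (a + b) \<le> (\<Prod>i\<in>UNIV. (1 + \<bar>real_of_int (a $ i)\<bar>) * (1 + \<bar>real_of_int (b $ i)\<bar>))"
    unfolding Wk_def
  proof (rule prod_mono)
    fix i
    have "\<bar>real_of_int ((a + b) $ i)\<bar> \<le> \<bar>real_of_int (a $ i)\<bar> + \<bar>real_of_int (b $ i)\<bar>"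
      by simp
    moreover have "0 \<le> \<bar>real_of_int (a $ i)\<bar> * \<bar>real_of_int (b $ i)\<bar>" by simp
    moreover have "(1 + \<bar>real_of_int (a $ i)\<bar>) * (1 + \<bar>real_of_int (b $ i)\<bar>) = 1 + \<bar>real_of_int (a $ i)\<bar> + \<bar>real_of_int (b $ i)\<bar> + \<bar>real_of_int (a $ i)\<bar> * \<bar>real_of_int (b $ i)\<bar>"
      by (simp add: algebra_simps)
    ultimately show "0 \<le> 1 + \<bar>real_of_int ((a + b) $ i)\<bar> \<and>
      1 + \<bar>real_of_int ((a + b) $ i)\<bar> \<le> (1 + \<bar>real_of_int (a $ i)\<bar>) * (1 + \<bar>real_of_int (b $ i)\<bar>)"
      by linarith
  qed
  also have "\<dots> = Wk a * Wk b" unfolding Wk_def by (rule prod.distrib)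
  finally show ?thesis .
qed

lemma Wk_comp: "\<bar>real_of_int (d $ i)\<bar> \<le> Wk d"
proof -
  have "\<bar>real_of_int (d $ i)\<bar> \<le> 1 + \<bar>real_of_int (d $ i)\<bar>" by simp
  also have "\<dots> = (\<Prod>j\<in>{i}. 1 + \<bar>real_of_int (d $ j)\<bar>)" by simp
  also have "\<dots> \<le> Wk d" unfolding Wk_def
    by (rule prod_mono2) auto
  finally show ?thesis .
qed

lemma sum_le_prod1:
  fixes t :: "'a \<Rightarrow> real"
  assumes "finite A" "\<And>i. i \<in> A \<Longrightarrow> 0 \<le> t i"
  shows "1 + (\<Sum>i\<in>A. t i) \<le> (\<Prod>i\<in>A. 1 + t i)"
  using assms
proof (induction A rule: finite_induct)
  case empty then show ?case by simp
next
  case (insert x F)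
  have p1: "1 \<le> (\<Prod>i\<in>F. 1 + t i)" by (rule prod_ge_1) (use insert in auto)
  have "1 + (\<Sum>i\<in>insert x F. t i) = t x + (1 + (\<Sum>i\<in>F. t i))" using insert by simp
  also have "\<dots> \<le> t x * (\<Prod>i\<in>F. 1 + t i) + (\<Prod>i\<in>F. 1 + t i)"
  proof (rule add_mono)
    have "t x * 1 \<le> t x * (\<Prod>i\<in>F. 1 + t i)" by (rule mult_left_mono) (use insert p1 in auto)
    then show "t x \<le> t x * (\<Prod>i\<in>F. 1 + t i)" by simp
  qed (use insert in auto)
  also have "\<dots> = (\<Prod>i\<in>insert x F. 1 + t i)" using insert by (simp add: algebra_simps)
  finally show ?case .
qed

lemma jbr_le_Wk:
  assumes "0 < \<epsilon>" "\<epsilon> \<le> 1"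
  shows "jbr (lat \<epsilon> k) \<le> Wk k"
proof -
  let ?x = "lat \<epsilon> k"
  have "jbr ?x \<le> 1 + norm ?x"
    unfolding jbr_def by (rule real_le_lsqrt) (auto simp: power2_eq_square algebra_simps)
  also have "\<dots> \<le> 1 + (\<Sum>i\<in>UNIV. \<bar>?x $ i\<bar>)" using norm_le_l1_cart by simp
  also have "\<dots> \<le> (\<Prod>i\<in>UNIV. 1 + \<bar>?x $ i\<bar>)" by (rule sum_le_prod1) auto
  also have "\<dots> \<le> Wk k" unfolding Wk_def
  proof (rule prod_mono)
    fix i
    have "\<bar>?x $ i\<bar> = \<epsilon> * \<bar>real_of_int (k $ i)\<bar>" using assms by (simp add: lat_def abs_mult)
    also have "\<dots> \<le> \<bar>real_of_int (k $ i)\<bar>" using assms by (simp add: mult_left_le_one_le)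
    finally show "0 \<le> 1 + \<bar>?x $ i\<bar> \<and> 1 + \<bar>?x $ i\<bar> \<le> 1 + \<bar>real_of_int (k $ i)\<bar>" by simp
  qed
  finally show ?thesis .
qed

lemma jbr_ge1: "1 \<le> jbr x"
  unfolding jbr_def by simp

lemma jbr_powr_le:
  assumes "0 < \<epsilon>" "\<epsilon> \<le> 1"
  shows "jbr (lat \<epsilon> k) powr N1 \<le> Wk k ^ nat \<lceil>N1\<rceil>"
proof (cases "N1 \<le> 0")
  case True
  have "jbr (lat \<epsilon> k) powr N1 \<le> 1"
  proof -
    have "jbr (lat \<epsilon> k) powr N1 \<le> jbr (lat \<epsilon> k) powr 0"
      by (rule powr_mono) (use True jbr_ge1 in auto)
    also have "\<dots> = 1" using jbr_ge1[of "lat \<epsilon> k"] by simp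
    finally show ?thesis .
  qed
  also have "1 \<le> Wk k ^ nat \<lceil>N1\<rceil>" using Wk_ge1 by (rule one_le_power)
  finally show ?thesis .
next
  case False
  have "jbr (lat \<epsilon> k) powr N1 \<le> Wk k powr N1"
    using False jbr_le_Wk[OF assms] jbr_ge1[of "lat \<epsilon> k"] by (intro powr_mono2) auto
  also have "\<dots> \<le> Wk k powr (real (nat \<lceil>N1\<rceil>))"
  proof (rule powr_mono)
    show "N1 \<le> real (nat \<lceil>N1\<rceil>)" by linarith
  qed (rule Wk_ge1)
  also have "\<dots> = Wk k ^ nat \<lceil>N1\<rceil>" using Wk_pos[of k] by (rule powr_realpow)
  finally show ?thesis .
qed

lemma one_plus_pow_le:
  fixes t :: real assumes "0 \<le> t"
  shows "(1 + t) ^ n \<le> 2 ^ n * (1 + t ^ n)"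
proof (cases "t \<le> 1")
  case True
  have "(1 + t) ^ n \<le> 2 ^ n" using True assms by (intro power_mono) auto
  also have "\<dots> \<le> 2 ^ n * (1 + t ^ n)" using assms by simp
  finally show ?thesis .
next
  case False
  have "(1 + t) ^ n \<le> (2 * t) ^ n" using False by (intro power_mono) auto
  also have "\<dots> = 2 ^ n * t ^ n" by (simp add: power_mult_distrib)
  also have "\<dots> \<le> 2 ^ n * (1 + t ^ n)" by simp
  finally show ?thesis .
qed


definition g1 :: "int \<Rightarrow> real" where "g1 z = 1 / (1 + \<bar>real_of_int z\<bar>)^2"

definition g2 :: "int^'n \<Rightarrow> real" where "g2 l = (\<Prod>i\<in>UNIV. g1 (l $ i))"

lemma g1_nonneg: "0 \<le> g1 z" unfolding g1_def by simp

lemma g2_nonneg: "0 \<le> g2 l" unfolding g2_def by (intro prod_nonneg) (simp add: g1_nonneg)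

lemma g1_summable: "g1 summable_on UNIV"
proof -
  define gn where "gn n = 1 / (real n + 1)^2" for n :: nat
  have s1: "summable (\<lambda>n::nat. inverse (real n ^ 2))" by (rule inverse_power_summable) simp
  then have "summable (\<lambda>n::nat. inverse (real (Suc n) ^ 2))" by (subst summable_Suc_iff)
  moreover have "(\<lambda>n::nat. inverse (real (Suc n) ^ 2)) = gn" unfolding gn_def
    by (auto simp: fun_eq_iff inverse_eq_divide add.commute)
  ultimately have "summable gn" by simp
  then have sgn: "gn summable_on UNIV" by (subst summable_on_UNIV_nonneg_real_iff) (auto simp: gn_def)
  have A: "g1 summable_on (range int)"
  proof (subst summable_on_reindex)
    show "inj_on int UNIV" by simp
    have "g1 \<circ> int = gn" by (auto simp: fun_eq_iff g1_def gn_def add.commute)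
    then show "(g1 \<circ> int) summable_on UNIV" using sgn by simp
  qed
  have B: "g1 summable_on (range (\<lambda>n::nat. - int n - 1))"
  proof (subst summable_on_reindex)
    show "inj_on (\<lambda>n::nat. - int n - 1) UNIV" by (auto simp: inj_on_def)
    show "(g1 \<circ> (\<lambda>n::nat. - int n - 1)) summable_on UNIV"
    proof (rule summable_on_comparison_test[OF sgn])
      fix n :: nat
      have "(real n + 1)^2 \<le> (1 + \<bar>real_of_int (- int n - 1)\<bar>)^2"
        by (intro power_mono) auto
      then show "(g1 \<circ> (\<lambda>n::nat. - int n - 1)) n \<le> gn n"
        unfolding g1_def gn_def o_def by (intro divide_left_mono) auto
      show "0 \<le> (g1 \<circ> (\<lambda>n::nat. - int n - 1)) n" by (simp add: g1_nonneg)
    qed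
  qed
  have U: "range int \<union> range (\<lambda>n::nat. - int n - 1) = (UNIV :: int set)"
  proof -
    have "z \<in> range int \<union> range (\<lambda>n::nat. - int n - 1)" for z :: int
    proof (cases "z \<ge> 0")
      case True then have "z = int (nat z)" by simp
      then show ?thesis by blast
    next
      case False then have "z = - int (nat (- z - 1)) - 1" by simp
      then show ?thesis by blast
    qed
    then show ?thesis by blast
  qed
  have D: "range int \<inter> range (\<lambda>n::nat. - int n - 1) = {}" by auto
  show ?thesis using summable_on_Un_disjoint[OF A B D] unfolding U .
qed

lemma g2_partial:
  fixes F :: "(int^'n) set"
  assumes "finite F"
  shows "sum g2 F \<le> (infsum g1 UNIV) ^ CARD('n)"
proof -
  define B' where "B' i = (\<lambda>l. l $ i) ` F" for i :: 'n
  have finB: "finite (B' i)" for i unfolding B'_def using assms by simp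
  have "sum g2 F = sum (\<lambda>p. \<Prod>i\<in>UNIV. g1 (p i)) (vec_nth ` F)"
    unfolding g2_def by (subst sum.reindex) (auto simp: inj_on_def vec_nth_inject)
  also have "\<dots> \<le> sum (\<lambda>p. \<Prod>i\<in>UNIV. g1 (p i)) (PiE UNIV B')"
  proof (rule sum_mono2)
    show "finite (PiE UNIV B')" using finB by (simp add: finite_PiE)
    show "vec_nth ` F \<subseteq> PiE UNIV B'" unfolding B'_def by auto
    show "\<And>b. b \<in> PiE UNIV B' - vec_nth ` F \<Longrightarrow> 0 \<le> (\<Prod>i\<in>UNIV. g1 (b i))"
      by (intro prod_nonneg) (simp add: g1_nonneg)
  qed
  also have "\<dots> = (\<Prod>i\<in>UNIV. \<Sum>y\<in>B' i. g1 y)"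
    by (rule prod_sum_PiE[symmetric]) (use finB in auto)
  also have "\<dots> \<le> (\<Prod>i\<in>(UNIV::'n set). infsum g1 UNIV)"
  proof (rule prod_mono)
    fix i :: 'n
    show "0 \<le> (\<Sum>y\<in>B' i. g1 y) \<and> (\<Sum>y\<in>B' i. g1 y) \<le> infsum g1 UNIV"
      using finite_sum_le_infsum[OF g1_summable finB[of i]] by (auto intro: sum_nonneg g1_nonneg)
  qed
  also have "\<dots> = (infsum g1 UNIV) ^ CARD('n)" by simp
  finally show ?thesis .
qed

lemma g2_summable: "(g2 :: int^'n \<Rightarrow> real) summable_on UNIV"
proof (rule nonneg_bdd_above_summable_on)
  show "0 \<le> g2 x" for x :: "int^'n" by (rule g2_nonneg)
  show "bdd_above (sum (g2 :: int^'n \<Rightarrow> real) ` {F. F \<subseteq> UNIV \<and> finite F})"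
    by (rule bdd_aboveI[where M = "(infsum g1 UNIV) ^ CARD('n)"]) (auto intro: g2_partial)
qed

lemma Wk_g2:
  fixes l :: "int^'n"
  shows "Wk l ^ 2 * g2 l = 1"
proof -
  have "Wk l ^ 2 * g2 l = (\<Prod>i\<in>UNIV. (1 + \<bar>real_of_int (l $ i)\<bar>)^2 * g1 (l $ i))"
    unfolding Wk_def g2_def by (simp add: prod_power_distrib prod.distrib)
  also have "\<dots> = (\<Prod>i\<in>(UNIV::'n set). 1)"
  proof (rule prod.cong)
    fix i
    have "0 < (1 + \<bar>real_of_int (l $ i)\<bar>)^2" by (simp add: add_pos_nonneg)
    then show "(1 + \<bar>real_of_int (l $ i)\<bar>)^2 * g1 (l $ i) = 1" unfolding g1_def by simp
  qed simp
  finally show ?thesis by simp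
qed

lemma kernel_poly:
  fixes m :: "real^'n \<Rightarrow> real^'n \<Rightarrow> real" and a :: "real^'n \<Rightarrow> real^'n \<Rightarrow> real \<Rightarrow> complex"
  assumes om: "\<forall>x y \<xi> \<eta>. m x \<xi> \<le> C0 * jbr (x - y) powr N1 * m y \<eta>" and m0: "\<forall>x \<xi>. 0 \<le> m x \<xi>"
    and sc: "symbol_class 0 \<delta> m a" and e: "0 < \<epsilon>" "\<epsilon> \<le> 1"
  shows "\<exists>C\<ge>0. \<forall>k l. Wk (l - k) ^ N * norm (Kern \<epsilon> a k l) \<le> C * Wk k ^ nat \<lceil>N1\<rceil>"
proof -
  define M where "M = N * CARD('n)"
  have "\<forall>i::'n. \<exists>C. C \<ge> 0 \<and> (\<forall>k l. norm (Kern \<epsilon> a k l) \<le> C * jbr (lat \<epsilon> k) powr N1)"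
  proof
    fix i :: 'n
    show "\<exists>C. C \<ge> 0 \<and> (\<forall>k l. norm (Kern \<epsilon> a k l) \<le> C * jbr (lat \<epsilon> k) powr N1)"
      using kernel_decay[OF om m0 sc e, of i 0] by simp
  qed
  note exCa = this
  define Ca where "Ca i = (SOME C. C \<ge> 0 \<and> (\<forall>k l. norm (Kern \<epsilon> a k l) \<le> C * jbr (lat \<epsilon> k) powr N1))" for i :: 'n
  have Ca: "\<forall>i. Ca i \<ge> 0 \<and> (\<forall>k l. norm (Kern \<epsilon> a k l) \<le> Ca i * jbr (lat \<epsilon> k) powr N1)"
  proof
    fix i
    show "Ca i \<ge> 0 \<and> (\<forall>k l. norm (Kern \<epsilon> a k l) \<le> Ca i * jbr (lat \<epsilon> k) powr N1)"
      unfolding Ca_def by (rule someI_ex) (use exCa in blast)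
  qed
  have "\<forall>i::'n. \<exists>C. C \<ge> 0 \<and> (\<forall>k l. \<bar>real_of_int ((l - k) $ i)\<bar> ^ M * norm (Kern \<epsilon> a k l) \<le> C * jbr (lat \<epsilon> k) powr N1)"
  proof
    fix i :: 'n
    show "\<exists>C. C \<ge> 0 \<and> (\<forall>k l. \<bar>real_of_int ((l - k) $ i)\<bar> ^ M * norm (Kern \<epsilon> a k l) \<le> C * jbr (lat \<epsilon> k) powr N1)"
      using kernel_decay[OF om m0 sc e, of i M] by blast
  qed
  note exCb = this
  define Cb where "Cb i = (SOME C. C \<ge> 0 \<and> (\<forall>k l. \<bar>real_of_int ((l - k) $ i)\<bar> ^ M * norm (Kern \<epsilon> a k l) \<le> C * jbr (lat \<epsilon> k) powr N1))" for i :: 'n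
  have Cb: "\<forall>i. Cb i \<ge> 0 \<and> (\<forall>k l. \<bar>real_of_int ((l - k) $ i)\<bar> ^ M * norm (Kern \<epsilon> a k l) \<le> Cb i * jbr (lat \<epsilon> k) powr N1)"
  proof
    fix i
    show "Cb i \<ge> 0 \<and> (\<forall>k l. \<bar>real_of_int ((l - k) $ i)\<bar> ^ M * norm (Kern \<epsilon> a k l) \<le> Cb i * jbr (lat \<epsilon> k) powr N1)"
      unfolding Cb_def by (rule someI_ex) (use exCb in blast)
  qed
  define D where "D = 2 ^ M * (\<Sum>i\<in>(UNIV::'n set). Ca i + Cb i)"
  have D0: "0 \<le> D" unfolding D_def using Ca Cb by (intro mult_nonneg_nonneg sum_nonneg) (auto intro: add_nonneg_nonneg)
  show ?thesis
  proof (intro exI[of _ D] conjI allI)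
    show "0 \<le> D" by (rule D0)
    fix k l :: "int^'n"
    define d where "d = l - k"
    define f where "f i = \<bar>real_of_int (d $ i)\<bar>" for i
    have fin: "finite (range f)" by simp
    have "Max (range f) \<in> range f" by (rule Max_in[OF fin]) simp
    then obtain i0 where i0: "f i0 = Max (range f)" by (metis imageE)
    have fle: "f i \<le> f i0" for i using Max_ge[OF fin, of "f i"] i0 by simp
    define t where "t = f i0"
    have t0: "0 \<le> t" unfolding t_def f_def by simp
    define J where "J = jbr (lat \<epsilon> k) powr N1"
    have J0: "0 \<le> J" unfolding J_def by simp
    define nK where "nK = norm (Kern \<epsilon> a k l)"
    have nK0: "0 \<le> nK" unfolding nK_def by simp
    have "Wk d \<le> (\<Prod>i\<in>(UNIV::'n set). 1 + t)"
      unfolding Wk_def by (rule prod_mono) (use fle in \<open>auto simp: t_def f_def\<close>)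
    also have "\<dots> = (1 + t) ^ CARD('n)" by simp
    finally have "Wk d ^ N \<le> ((1 + t) ^ CARD('n)) ^ N"
      using Wk_ge1[of d] by (intro power_mono) auto
    also have "\<dots> = (1 + t) ^ M" unfolding M_def by (simp add: power_mult[symmetric] mult.commute)
    also have "\<dots> \<le> 2 ^ M * (1 + t ^ M)" by (rule one_plus_pow_le[OF t0])
    finally have W: "Wk d ^ N \<le> 2 ^ M * (1 + t ^ M)" .
    have "Wk d ^ N * nK \<le> 2 ^ M * (1 + t ^ M) * nK" using W nK0 by (rule mult_right_mono)
    also have "\<dots> = 2 ^ M * (nK + t ^ M * nK)" by (simp add: algebra_simps)
    also have "\<dots> \<le> 2 ^ M * (Ca i0 * J + Cb i0 * J)"
    proof -
      have "nK \<le> Ca i0 * J" using Ca unfolding nK_def J_def by blast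
      moreover have "t ^ M * nK \<le> Cb i0 * J" using Cb unfolding nK_def J_def t_def f_def d_def by blast
      ultimately show ?thesis by (intro mult_left_mono) auto
    qed
    also have "\<dots> = 2 ^ M * (Ca i0 + Cb i0) * J" by (simp add: algebra_simps)
    also have "\<dots> \<le> D * J" unfolding D_def
    proof (intro mult_right_mono mult_left_mono J0)
      show "Ca i0 + Cb i0 \<le> (\<Sum>i\<in>(UNIV::'n set). Ca i + Cb i)"
        by (rule member_le_sum) (use Ca Cb in \<open>auto intro: add_nonneg_nonneg\<close>)
    qed simp
    also have "\<dots> \<le> D * Wk k ^ nat \<lceil>N1\<rceil>" unfolding J_def
      by (rule mult_left_mono[OF jbr_powr_le[OF e] D0])
    finally show "Wk (l - k) ^ N * norm (Kern \<epsilon> a k l) \<le> D * Wk k ^ nat \<lceil>N1\<rceil>"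
      unfolding d_def nK_def .
  qed
qed


lemma wmon_eq: "wmon \<epsilon> \<alpha> u k = (\<Prod>i\<in>UNIV. \<bar>lat \<epsilon> k $ i\<bar> ^ \<alpha> i) * norm (u k)"
  unfolding wmon_def by (simp only: norm_mult norm_of_real abs_prod power_abs)

lemma wmon_nonneg: "0 \<le> wmon \<epsilon> \<alpha> u k"
  unfolding wmon_def by simp

lemma wmon_le_sem: "u \<in> s_space \<epsilon> \<Longrightarrow> wmon \<epsilon> \<alpha> u k \<le> seminorm_s \<epsilon> \<alpha> u"
  unfolding seminorm_s_def s_space_def by (rule cSUP_upper) auto

lemma sem_nonneg: "u \<in> s_space \<epsilon> \<Longrightarrow> 0 \<le> seminorm_s \<epsilon> \<alpha> u"
  using wmon_le_sem[of u \<epsilon> \<alpha> 0] wmon_nonneg[of \<epsilon> \<alpha> u 0] by linarith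

lemma sem_le: "(\<And>k. wmon \<epsilon> \<alpha> u k \<le> X) \<Longrightarrow> seminorm_s \<epsilon> \<alpha> u \<le> X"
  unfolding seminorm_s_def by (rule cSUP_least) auto

lemma wmon_diff: "wmon \<epsilon> \<alpha> (u - v) k \<le> wmon \<epsilon> \<alpha> u k + wmon \<epsilon> \<alpha> v k"
proof -
  have "norm (u k - v k) \<le> norm (u k) + norm (v k)" by (rule norm_triangle_ineq4)
  then show ?thesis unfolding wmon_eq
    by (simp add: distrib_left[symmetric] mult_left_mono prod_nonneg)
qed

lemma s_space_diff:
  assumes "u \<in> s_space \<epsilon>" "v \<in> s_space \<epsilon>"
  shows "u - v \<in> s_space \<epsilon>"
  unfolding s_space_def
proof (safe)
  fix \<alpha>
  show "bdd_above (range (wmon \<epsilon> \<alpha> (u - v)))"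
  proof (rule bdd_aboveI2)
    fix k
    show "wmon \<epsilon> \<alpha> (u - v) k \<le> seminorm_s \<epsilon> \<alpha> u + seminorm_s \<epsilon> \<alpha> v"
      using wmon_diff[of \<epsilon> \<alpha> u v k] wmon_le_sem[OF assms(1), of \<alpha> k] wmon_le_sem[OF assms(2), of \<alpha> k]
      by linarith
  qed
qed

lemma wmon_Wk:
  assumes "0 < \<epsilon>" "\<epsilon> \<le> 1"
  shows "wmon \<epsilon> \<alpha> u k \<le> Wk k ^ (\<Sum>i\<in>UNIV. \<alpha> i) * norm (u k)"
proof -
  have "(\<Prod>i\<in>UNIV. \<bar>lat \<epsilon> k $ i\<bar> ^ \<alpha> i) \<le> (\<Prod>i\<in>UNIV. Wk k ^ \<alpha> i)"
  proof (rule prod_mono)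
    fix i
    have "\<bar>lat \<epsilon> k $ i\<bar> = \<epsilon> * \<bar>real_of_int (k $ i)\<bar>" using assms by (simp add: lat_def abs_mult)
    also have "\<dots> \<le> \<bar>real_of_int (k $ i)\<bar>" using assms by (simp add: mult_left_le_one_le)
    also have "\<dots> \<le> Wk k" by (rule Wk_comp)
    finally show "0 \<le> \<bar>lat \<epsilon> k $ i\<bar> ^ \<alpha> i \<and> \<bar>lat \<epsilon> k $ i\<bar> ^ \<alpha> i \<le> Wk k ^ \<alpha> i"
      by (simp add: power_mono)
  qed
  also have "\<dots> = Wk k ^ (\<Sum>i\<in>UNIV. \<alpha> i)" by (simp add: power_sum)
  finally show ?thesis unfolding wmon_eq by (rule mult_right_mono) simp
qed

definition alB :: "nat \<Rightarrow> 'n set \<Rightarrow> 'n \<Rightarrow> nat" where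
  "alB N B = (\<lambda>i. if i \<in> B then N else 0)"

definition Sem :: "real \<Rightarrow> nat \<Rightarrow> (int^'n \<Rightarrow> complex) \<Rightarrow> real" where
  "Sem \<epsilon> N v = (\<Sum>B\<in>Pow (UNIV::'n set). seminorm_s \<epsilon> (alB N B) v)"

lemma Sem_nonneg: "v \<in> s_space \<epsilon> \<Longrightarrow> 0 \<le> Sem \<epsilon> N v"
  unfolding Sem_def by (intro sum_nonneg sem_nonneg)

lemma weighted_v:
  fixes v :: "int^'n \<Rightarrow> complex"
  assumes v: "v \<in> s_space \<epsilon>" and e: "0 < \<epsilon>" "\<epsilon> \<le> 1"
  shows "Wk l ^ N * norm (v l) \<le> (2/\<epsilon>) ^ (N * CARD('n)) * Sem \<epsilon> N v"
proof -
  define x where "x i = \<bar>lat \<epsilon> l $ i\<bar>" for i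
  have x0: "0 \<le> x i" for i unfolding x_def by simp
  have "Wk l ^ N = (\<Prod>i\<in>UNIV. (1 + \<bar>real_of_int (l $ i)\<bar>) ^ N)"
    unfolding Wk_def by (simp add: prod_power_distrib)
  also have "\<dots> \<le> (\<Prod>i\<in>(UNIV::'n set). (2/\<epsilon>) ^ N * (x i ^ N + 1))"
  proof (rule prod_mono)
    fix i
    have li: "\<bar>real_of_int (l $ i)\<bar> = x i / \<epsilon>" unfolding x_def using e by (simp add: lat_def abs_mult)
    have "(1 + \<bar>real_of_int (l $ i)\<bar>) ^ N \<le> 2 ^ N * (1 + \<bar>real_of_int (l $ i)\<bar> ^ N)"
      by (rule one_plus_pow_le) simp
    also have "1 + \<bar>real_of_int (l $ i)\<bar> ^ N \<le> (1/\<epsilon>) ^ N * (x i ^ N + 1)"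
    proof -
      have "1 \<le> (1/\<epsilon>) ^ N" using e by (intro one_le_power) simp
      moreover have "\<bar>real_of_int (l $ i)\<bar> ^ N = (1/\<epsilon>) ^ N * x i ^ N"
        unfolding li by (simp add: power_divide)
      ultimately show ?thesis by (simp add: algebra_simps)
    qed
    then have "2 ^ N * (1 + \<bar>real_of_int (l $ i)\<bar> ^ N) \<le> 2 ^ N * ((1/\<epsilon>) ^ N * (x i ^ N + 1))"
      by (intro mult_left_mono) auto
    also have "\<dots> = (2/\<epsilon>) ^ N * (x i ^ N + 1)" by (simp add: power_divide)
    finally show "0 \<le> (1 + \<bar>real_of_int (l $ i)\<bar>) ^ N \<and> (1 + \<bar>real_of_int (l $ i)\<bar>) ^ N \<le> (2/\<epsilon>) ^ N * (x i ^ N + 1)"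
      by simp
  qed
  also have "\<dots> = (2/\<epsilon>) ^ (N * CARD('n)) * (\<Prod>i\<in>UNIV. x i ^ N + 1)"
    by (simp add: prod.distrib power_mult)
  also have "(\<Prod>i\<in>UNIV. x i ^ N + 1) = (\<Sum>B\<in>Pow (UNIV::'n set). \<Prod>i\<in>B. x i ^ N)"
    by (simp add: prod_add)
  also have "\<dots> = (\<Sum>B\<in>Pow (UNIV::'n set). \<Prod>i\<in>UNIV. x i ^ alB N B i)"
  proof (rule sum.cong)
    fix B :: "'n set"
    have "(\<Prod>i\<in>UNIV. x i ^ alB N B i) = (\<Prod>i\<in>UNIV. if i \<in> B then x i ^ N else 1)"
      unfolding alB_def by (rule prod.cong) auto
    also have "\<dots> = (\<Prod>i\<in>{i\<in>UNIV. i \<in> B}. x i ^ N)" by (rule prod.inter_filter[symmetric]) simp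
    finally show "(\<Prod>i\<in>B. x i ^ N) = (\<Prod>i\<in>UNIV. x i ^ alB N B i)" by simp
  qed simp
  finally have W: "Wk l ^ N \<le> (2/\<epsilon>) ^ (N * CARD('n)) * (\<Sum>B\<in>Pow (UNIV::'n set). \<Prod>i\<in>UNIV. x i ^ alB N B i)" .
  have "Wk l ^ N * norm (v l) \<le> (2/\<epsilon>) ^ (N * CARD('n)) * (\<Sum>B\<in>Pow (UNIV::'n set). \<Prod>i\<in>UNIV. x i ^ alB N B i) * norm (v l)"
    using W by (rule mult_right_mono) simp
  also have "\<dots> = (2/\<epsilon>) ^ (N * CARD('n)) * (\<Sum>B\<in>Pow (UNIV::'n set). wmon \<epsilon> (alB N B) v l)"
    unfolding wmon_eq x_def by (simp add: sum_distrib_right mult.assoc)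
  also have "\<dots> \<le> (2/\<epsilon>) ^ (N * CARD('n)) * Sem \<epsilon> N v"
    unfolding Sem_def using e by (intro mult_left_mono sum_mono wmon_le_sem[OF v]) auto
  finally show ?thesis .
qed

lemma alB_inj: "0 < N \<Longrightarrow> inj_on (alB N) A"
  unfolding inj_on_def alB_def fun_eq_iff by (metis (full_types) subsetI subset_antisym less_irrefl)

lemma Sem_as_sum: "0 < N \<Longrightarrow> Sem \<epsilon> N v = (\<Sum>\<beta>\<in>alB N ` Pow (UNIV::('n::finite) set). seminorm_s \<epsilon> \<beta> v)"
  unfolding Sem_def by (subst sum.reindex) (auto simp: alB_inj)


lemma K_abs_summable:
  fixes K :: "int^'n \<Rightarrow> int^'n \<Rightarrow> complex"
  assumes Kp: "\<forall>N. \<exists>C\<ge>0. \<forall>k l. Wk (l - k) ^ N * norm (K k l) \<le> C * Wk k ^ P"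
    and v: "v \<in> s_space \<epsilon>" and e: "0 < \<epsilon>" "\<epsilon> \<le> 1"
  shows "(\<lambda>l. norm (K k l * v l)) summable_on UNIV"
proof -
  obtain C0 where C0: "C0 \<ge> 0" "\<forall>k l. Wk (l - k) ^ 0 * norm (K k l) \<le> C0 * Wk k ^ P"
    using Kp by blast
  define Q where "Q = (2/\<epsilon>) ^ (2 * CARD('n)) * Sem \<epsilon> 2 v"
  have Q0: "0 \<le> Q" unfolding Q_def using Sem_nonneg[OF v] e by simp
  define D where "D = C0 * Wk k ^ P * Q"
  have D0: "0 \<le> D" unfolding D_def using C0 Q0 Wk_pos[of k] by simp
  have nv: "norm (v l) \<le> g2 l * Q" for l
  proof -
    have "norm (v l) = g2 l * (Wk l ^ 2 * norm (v l))" using Wk_g2[of l] by (simp add: algebra_simps)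
    also have "\<dots> \<le> g2 l * Q" unfolding Q_def
      by (rule mult_left_mono[OF weighted_v[OF v e] g2_nonneg])
    finally show ?thesis .
  qed
  have bd: "norm (K k l * v l) \<le> norm (D * g2 l)" for l
  proof -
    have "norm (K k l * v l) = norm (K k l) * norm (v l)" by (simp add: norm_mult)
    also have "\<dots> \<le> (C0 * Wk k ^ P) * (g2 l * Q)"
      using C0(2)[rule_format, of l k] nv[of l] C0(1) Wk_pos[of k] by (intro mult_mono) auto
    also have "\<dots> = D * g2 l" unfolding D_def by (simp add: algebra_simps)
    also have "\<dots> = norm (D * g2 l)" using D0 g2_nonneg[of l] by simp
    finally show ?thesis .
  qed
  have "(\<lambda>l. norm (D * g2 l)) summable_on UNIV"
  proof -
    have s: "(\<lambda>l. D * g2 l) summable_on UNIV" by (rule summable_on_cmult_right[OF g2_summable])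
    have eq: "(\<lambda>l. norm (D * g2 l)) = (\<lambda>l. D * g2 l)" proof
      fix l show "norm (D * g2 l) = D * g2 l" using D0 g2_nonneg[of l] by simp
    qed
    show ?thesis unfolding eq by (rule s)
  qed
  then show ?thesis by (rule Infinite_Sum.abs_summable_on_comparison_test) (use bd in auto)
qed

lemma main_est:
  fixes K :: "int^'n \<Rightarrow> int^'n \<Rightarrow> complex"
  assumes Kp: "\<forall>N. \<exists>C\<ge>0. \<forall>k l. Wk (l - k) ^ N * norm (K k l) \<le> C * Wk k ^ P"
    and e: "0 < \<epsilon>" "\<epsilon> \<le> 1"
  shows "\<exists>G Ct. finite G \<and> 0 \<le> Ct \<and> (\<forall>v\<in>s_space \<epsilon>. \<forall>k.
     wmon \<epsilon> \<alpha> (\<lambda>k. c * infsum (\<lambda>l. K k l * v l) UNIV) k \<le> Ct * (\<Sum>\<beta>\<in>G. seminorm_s \<epsilon> \<beta> v))"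
proof -
  define A where "A = (\<Sum>i\<in>UNIV. \<alpha> i)"
  define N where "N = A + P"
  obtain C where C: "C \<ge> 0" "\<forall>k l. Wk (l - k) ^ N * norm (K k l) \<le> C * Wk k ^ P"
    using Kp by blast
  define G2 where "G2 = infsum (g2 :: int^'n \<Rightarrow> real) UNIV"
  have G20: "0 \<le> G2" unfolding G2_def by (rule infsum_nonneg) (rule g2_nonneg)
  define Q where "Q (v::int^'n \<Rightarrow> complex) = (2/\<epsilon>) ^ ((N+2) * CARD('n)) * Sem \<epsilon> (N+2) v" for v
  define Ct where "Ct = norm c * C * G2 * (2/\<epsilon>) ^ ((N+2) * CARD('n))"
  define G where "G = alB (N+2) ` Pow (UNIV::'n set)"
  show ?thesis
  proof (intro exI[of _ G] exI[of _ Ct] conjI ballI allI)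
    show "finite G" unfolding G_def by simp
    show "0 \<le> Ct" unfolding Ct_def using C G20 e by simp
    fix v :: "int^'n \<Rightarrow> complex" and k :: "int^'n"
    assume v: "v \<in> s_space \<epsilon>"
    have pw: "Wk k ^ A * norm (K k l * v l) \<le> (C * Q v) * g2 l" for l
    proof -
      have "Wk k = Wk ((k - l) + l)" by simp
      also have "\<dots> \<le> Wk (k - l) * Wk l" by (rule Wk_add)
      also have "Wk (k - l) = Wk (l - k)" using Wk_minus[of "l - k"] by simp
      finally have "Wk k ^ N \<le> (Wk (l - k) * Wk l) ^ N"
        using Wk_ge1[of k] by (intro power_mono) auto
      then have W: "Wk k ^ N \<le> Wk (l - k) ^ N * Wk l ^ N" by (simp add: power_mult_distrib)
      define nK where "nK = norm (K k l)"
      have nK0: "0 \<le> nK" unfolding nK_def by simp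
      have "Wk (l - k) ^ N * (Wk k ^ A * nK) = Wk k ^ A * (Wk (l - k) ^ N * nK)" by (simp add: algebra_simps)
      also have "\<dots> \<le> Wk k ^ A * (C * Wk k ^ P)"
        using C(2) unfolding nK_def by (intro mult_left_mono) (auto simp: Wk_pos less_imp_le)
      also have "\<dots> = C * Wk k ^ N" unfolding N_def by (simp add: power_add algebra_simps)
      also have "\<dots> \<le> C * (Wk (l - k) ^ N * Wk l ^ N)" using W C(1) by (rule mult_left_mono)
      also have "\<dots> = Wk (l - k) ^ N * (C * Wk l ^ N)" by (simp add: algebra_simps)
      finally have "Wk k ^ A * nK \<le> C * Wk l ^ N"
        using Wk_pos[of "l - k"] by (simp add: mult_le_cancel_left_pos)
      then have "Wk k ^ A * nK * norm (v l) \<le> C * Wk l ^ N * norm (v l)"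
        by (rule mult_right_mono) simp
      also have "C * Wk l ^ N * norm (v l) = C * g2 l * (Wk l ^ (N+2) * norm (v l))"
      proof -
        have "Wk l ^ (N+2) * g2 l = Wk l ^ N * (Wk l ^ 2 * g2 l)" by (simp only: power_add mult.assoc)
        then have "Wk l ^ (N+2) * g2 l = Wk l ^ N" using Wk_g2[of l] by simp
        then show ?thesis by (metis (no_types, lifting) mult.assoc mult.commute)
      qed
      also have "\<dots> \<le> C * g2 l * Q v" unfolding Q_def
        by (rule mult_left_mono[OF weighted_v[OF v e]]) (rule mult_nonneg_nonneg[OF C(1) g2_nonneg])
      finally show ?thesis unfolding nK_def by (simp add: norm_mult algebra_simps)
    qed
    have sK: "(\<lambda>l. norm (K k l * v l)) summable_on UNIV"
      using K_abs_summable[OF Kp v e, of k] by simp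
    have "norm (infsum (\<lambda>l. K k l * v l) UNIV) \<le> infsum (\<lambda>l. norm (K k l * v l)) UNIV"
      by (rule norm_infsum_bound) (rule K_abs_summable[OF Kp v e])
    then have "Wk k ^ A * norm (infsum (\<lambda>l. K k l * v l) UNIV) \<le> Wk k ^ A * infsum (\<lambda>l. norm (K k l * v l)) UNIV"
      by (rule mult_left_mono) (simp add: Wk_pos less_imp_le)
    also have "\<dots> = infsum (\<lambda>l. Wk k ^ A * norm (K k l * v l)) UNIV"
      by (rule infsum_cmult_right'[symmetric])
    also have "\<dots> \<le> infsum (\<lambda>l::int^'n. (C * Q v) * g2 l) UNIV"
    proof (rule Infinite_Sum.infsum_mono)
      show "(\<lambda>l. Wk k ^ A * norm (K k l * v l)) summable_on UNIV" by (rule summable_on_cmult_right[OF sK])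
      show "(\<lambda>l::int^'n. (C * Q v) * g2 l) summable_on UNIV" by (rule summable_on_cmult_right[OF g2_summable])
    qed (rule pw)
    also have "\<dots> = C * Q v * G2" unfolding G2_def by (rule infsum_cmult_right')
    finally have I: "Wk k ^ A * norm (infsum (\<lambda>l. K k l * v l) UNIV) \<le> C * Q v * G2" .
    have "wmon \<epsilon> \<alpha> (\<lambda>k. c * infsum (\<lambda>l. K k l * v l) UNIV) k \<le> Wk k ^ A * norm (c * infsum (\<lambda>l. K k l * v l) UNIV)"
      unfolding A_def by (rule wmon_Wk[OF e])
    also have "\<dots> = norm c * (Wk k ^ A * norm (infsum (\<lambda>l. K k l * v l) UNIV))"
      by (simp add: norm_mult algebra_simps)
    also have "\<dots> \<le> norm c * (C * Q v * G2)" using I by (rule mult_left_mono) simp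
    also have "\<dots> = Ct * Sem \<epsilon> (N+2) v" unfolding Ct_def Q_def by (simp add: algebra_simps)
    also have "Sem \<epsilon> (N+2) v = (\<Sum>\<beta>\<in>G. seminorm_s \<epsilon> \<beta> v)" unfolding G_def by (rule Sem_as_sum) simp
    finally show "wmon \<epsilon> \<alpha> (\<lambda>k. c * infsum (\<lambda>l. K k l * v l) UNIV) k \<le> Ct * (\<Sum>\<beta>\<in>G. seminorm_s \<epsilon> \<beta> v)" .
  qed
qed

lemma Op_diff:
  fixes K :: "int^'n \<Rightarrow> int^'n \<Rightarrow> complex"
  assumes Kp: "\<forall>N. \<exists>C\<ge>0. \<forall>k l. Wk (l - k) ^ N * norm (K k l) \<le> C * Wk k ^ P"
    and v: "v \<in> s_space \<epsilon>" and u: "u \<in> s_space \<epsilon>" and e: "0 < \<epsilon>" "\<epsilon> \<le> 1"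
  shows "c * infsum (\<lambda>l. K k l * v l) UNIV - c * infsum (\<lambda>l. K k l * u l) UNIV
       = c * infsum (\<lambda>l. K k l * (v - u) l) UNIV"
proof -
  have sv: "(\<lambda>l. K k l * v l) summable_on UNIV" by (rule abs_summable_summable[OF K_abs_summable[OF Kp v e]])
  have su: "(\<lambda>l. - (K k l * u l)) summable_on UNIV"
    using abs_summable_summable[OF K_abs_summable[OF Kp u e]] by (simp add: summable_on_uminus)
  have "infsum (\<lambda>l. K k l * (v - u) l) UNIV = infsum (\<lambda>l. K k l * v l + - (K k l * u l)) UNIV"
    by (simp add: algebra_simps)
  also have "\<dots> = infsum (\<lambda>l. K k l * v l) UNIV + infsum (\<lambda>l. - (K k l * u l)) UNIV"
    by (rule infsum_add[OF sv su])
  also have "\<dots> = infsum (\<lambda>l. K k l * v l) UNIV - infsum (\<lambda>l. K k l * u l) UNIV"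
    by (simp add: infsum_uminus)
  finally have X: "infsum (\<lambda>l. K k l * (v - u) l) UNIV = infsum (\<lambda>l. K k l * v l) UNIV - infsum (\<lambda>l. K k l * u l) UNIV" .
  show ?thesis unfolding X by (simp add: right_diff_distrib)
qed


definition sopen :: "real \<Rightarrow> (int^'n \<Rightarrow> complex) set \<Rightarrow> bool" where
  "sopen \<epsilon> U \<longleftrightarrow> U \<subseteq> s_space \<epsilon> \<and>
     (\<forall>u\<in>U. \<exists>F r. finite F \<and> r > 0 \<and> {v \<in> s_space \<epsilon>. \<forall>\<alpha>\<in>F. seminorm_s \<epsilon> \<alpha> (v - u) < r} \<subseteq> U)"

lemma sopen_D:
  assumes "sopen \<epsilon> U" "u \<in> U"
  obtains F r where "finite F" "r > 0" "{v \<in> s_space \<epsilon>. \<forall>\<alpha>\<in>F. seminorm_s \<epsilon> \<alpha> (v - u) < r} \<subseteq> U"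
proof -
  have "\<forall>u\<in>U. \<exists>F r. finite F \<and> r > 0 \<and> {v \<in> s_space \<epsilon>. \<forall>\<alpha>\<in>F. seminorm_s \<epsilon> \<alpha> (v - u) < r} \<subseteq> U"
    using assms(1) unfolding sopen_def by (rule conjunct2)
  then have "\<exists>F r. finite F \<and> r > 0 \<and> {v \<in> s_space \<epsilon>. \<forall>\<alpha>\<in>F. seminorm_s \<epsilon> \<alpha> (v - u) < r} \<subseteq> U"
    using assms(2) by (rule bspec)
  then show ?thesis using that by blast
qed

lemma sopen_sub: "sopen \<epsilon> U \<Longrightarrow> U \<subseteq> s_space \<epsilon>"
  unfolding sopen_def by (rule conjunct1)

lemma sopen_I:
  assumes "U \<subseteq> s_space \<epsilon>"
    "\<And>u. u \<in> U \<Longrightarrow> \<exists>F r. finite F \<and> r > 0 \<and> {v \<in> s_space \<epsilon>. \<forall>\<alpha>\<in>F. seminorm_s \<epsilon> \<alpha> (v - u) < r} \<subseteq> U"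
  shows "sopen \<epsilon> U"
  unfolding sopen_def using assms by blast

lemma istop: "istopology (sopen \<epsilon>)"
  unfolding istopology_def
proof (intro conjI allI impI)
  fix S T :: "(int^'n \<Rightarrow> complex) set"
  assume S: "sopen \<epsilon> S" and T: "sopen \<epsilon> T"
  show "sopen \<epsilon> (S \<inter> T)"
  proof (rule sopen_I)
    show "S \<inter> T \<subseteq> s_space \<epsilon>" using sopen_sub[OF S] by blast
    fix u assume u: "u \<in> S \<inter> T"
    obtain F1 r1 where 1: "finite F1" "r1 > 0" "{v \<in> s_space \<epsilon>. \<forall>\<alpha>\<in>F1. seminorm_s \<epsilon> \<alpha> (v - u) < r1} \<subseteq> S"
      using u by (auto intro: sopen_D[OF S])
    obtain F2 r2 where 2: "finite F2" "r2 > 0" "{v \<in> s_space \<epsilon>. \<forall>\<alpha>\<in>F2. seminorm_s \<epsilon> \<alpha> (v - u) < r2} \<subseteq> T"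
      using u by (auto intro: sopen_D[OF T])
    show "\<exists>F r. finite F \<and> r > 0 \<and> {v \<in> s_space \<epsilon>. \<forall>\<alpha>\<in>F. seminorm_s \<epsilon> \<alpha> (v - u) < r} \<subseteq> S \<inter> T"
    proof (intro exI[of _ "F1 \<union> F2"] exI[of _ "min r1 r2"] conjI)
      show "finite (F1 \<union> F2)" using 1 2 by simp
      show "0 < min r1 r2" using 1 2 by simp
      show "{v \<in> s_space \<epsilon>. \<forall>\<alpha>\<in>F1 \<union> F2. seminorm_s \<epsilon> \<alpha> (v - u) < min r1 r2} \<subseteq> S \<inter> T"
      proof (rule subsetI)
        fix v assume v: "v \<in> {v \<in> s_space \<epsilon>. \<forall>\<alpha>\<in>F1 \<union> F2. seminorm_s \<epsilon> \<alpha> (v - u) < min r1 r2}"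
        then have vs: "v \<in> s_space \<epsilon>" and va: "\<forall>\<alpha>\<in>F1 \<union> F2. seminorm_s \<epsilon> \<alpha> (v - u) < min r1 r2" by auto
        have "v \<in> {v \<in> s_space \<epsilon>. \<forall>\<alpha>\<in>F1. seminorm_s \<epsilon> \<alpha> (v - u) < r1}" using vs va by auto
        moreover have "v \<in> {v \<in> s_space \<epsilon>. \<forall>\<alpha>\<in>F2. seminorm_s \<epsilon> \<alpha> (v - u) < r2}" using vs va by auto
        ultimately show "v \<in> S \<inter> T" using 1(3) 2(3) by blast
      qed
    qed
  qed
next
  fix K :: "(int^'n \<Rightarrow> complex) set set"
  assume K: "\<forall>S\<in>K. sopen \<epsilon> S"
  show "sopen \<epsilon> (\<Union>K)"
  proof (rule sopen_I)
    show "\<Union>K \<subseteq> s_space \<epsilon>" using K sopen_sub by blast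
    fix u assume "u \<in> \<Union>K"
    then obtain S where S: "S \<in> K" "u \<in> S" by blast
    have So: "sopen \<epsilon> S" using K S(1) by blast
    obtain F r where Fr: "finite F" "r > 0" "{v \<in> s_space \<epsilon>. \<forall>\<alpha>\<in>F. seminorm_s \<epsilon> \<alpha> (v - u) < r} \<subseteq> S"
      by (rule sopen_D[OF So S(2)])
    show "\<exists>F r. finite F \<and> r > 0 \<and> {v \<in> s_space \<epsilon>. \<forall>\<alpha>\<in>F. seminorm_s \<epsilon> \<alpha> (v - u) < r} \<subseteq> \<Union>K"
      using Fr S(1) by blast
  qed
qed

lemma s_top_eq: "s_topology \<epsilon> = topology (sopen \<epsilon>)"
  unfolding s_topology_def sopen_def[abs_def] by (rule refl)

lemma s_open: "openin (s_topology \<epsilon>) = sopen \<epsilon>"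
  unfolding s_top_eq by (rule topology_inverse'[OF istop])

lemma s_topspace: "topspace (s_topology \<epsilon>) = s_space \<epsilon>"
proof
  show "topspace (s_topology \<epsilon>) \<subseteq> s_space \<epsilon>"
  proof
    fix x assume "x \<in> topspace (s_topology \<epsilon>)"
    then obtain S where "sopen \<epsilon> S" "x \<in> S" unfolding topspace_def s_open by blast
    then show "x \<in> s_space \<epsilon>" using sopen_sub by blast
  qed
  have "sopen \<epsilon> (s_space \<epsilon>)" unfolding sopen_def
  proof (intro conjI ballI)
    show "s_space \<epsilon> \<subseteq> s_space \<epsilon>" by simp
    fix u
    show "\<exists>F r. finite F \<and> r > 0 \<and> {v \<in> s_space \<epsilon>. \<forall>\<alpha>\<in>F. seminorm_s \<epsilon> \<alpha> (v - u) < r} \<subseteq> s_space \<epsilon>"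
      by (intro exI[of _ "{}"] exI[of _ "1::real"]) auto
  qed
  then show "s_space \<epsilon> \<subseteq> topspace (s_topology \<epsilon>)"
    unfolding topspace_def s_open by blast
qed

lemma cont_abstract:
  fixes Op :: "(int^'n \<Rightarrow> complex) \<Rightarrow> int^'n \<Rightarrow> complex"
  assumes maps: "\<And>v. v \<in> s_space \<epsilon> \<Longrightarrow> Op v \<in> s_space \<epsilon>"
    and lin: "\<And>v u. v \<in> s_space \<epsilon> \<Longrightarrow> u \<in> s_space \<epsilon> \<Longrightarrow> Op v - Op u = Op (v - u)"
    and est: "\<And>\<alpha>. \<exists>G C. finite G \<and> 0 \<le> C \<and> (\<forall>v\<in>s_space \<epsilon>. seminorm_s \<epsilon> \<alpha> (Op v) \<le> C * (\<Sum>\<beta>\<in>G. seminorm_s \<epsilon> \<beta> v))"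
  shows "continuous_map (s_topology \<epsilon>) (s_topology \<epsilon>) Op"
proof -
  define PP where "PP \<alpha> p \<longleftrightarrow> finite (fst p) \<and> 0 \<le> snd p \<and>
      (\<forall>v\<in>s_space \<epsilon>. seminorm_s \<epsilon> \<alpha> (Op v) \<le> snd p * (\<Sum>\<beta>\<in>fst p. seminorm_s \<epsilon> \<beta> v))" for \<alpha> p
  define GC where "GC \<alpha> = (SOME p. PP \<alpha> p)" for \<alpha>
  define Gf where "Gf \<alpha> = fst (GC \<alpha>)" for \<alpha>
  define Cf where "Cf \<alpha> = snd (GC \<alpha>)" for \<alpha>
  have GC: "finite (Gf \<alpha>) \<and> 0 \<le> Cf \<alpha> \<and> (\<forall>v\<in>s_space \<epsilon>. seminorm_s \<epsilon> \<alpha> (Op v) \<le> Cf \<alpha> * (\<Sum>\<beta>\<in>Gf \<alpha>. seminorm_s \<epsilon> \<beta> v))" for \<alpha>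
  proof -
    obtain G C where "finite G \<and> 0 \<le> C \<and> (\<forall>v\<in>s_space \<epsilon>. seminorm_s \<epsilon> \<alpha> (Op v) \<le> C * (\<Sum>\<beta>\<in>G. seminorm_s \<epsilon> \<beta> v))"
      using est by blast
    then have "PP \<alpha> (G, C)" unfolding PP_def by simp
    then have "PP \<alpha> (GC \<alpha>)" unfolding GC_def by (rule someI)
    then show ?thesis unfolding PP_def Gf_def Cf_def .
  qed
  show ?thesis unfolding continuous_map_def s_topspace s_open
  proof (intro conjI allI impI)
    show "Op \<in> s_space \<epsilon> \<rightarrow> s_space \<epsilon>" using maps by blast
    fix U :: "(int^'n \<Rightarrow> complex) set" assume U: "sopen \<epsilon> U"
    show "sopen \<epsilon> {x \<in> s_space \<epsilon>. Op x \<in> U}"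
    proof (rule sopen_I)
      show "{x \<in> s_space \<epsilon>. Op x \<in> U} \<subseteq> s_space \<epsilon>" by blast
      fix v0 :: "int^'n \<Rightarrow> complex" assume v0: "v0 \<in> {x \<in> s_space \<epsilon>. Op x \<in> U}"
      have v0s: "v0 \<in> s_space \<epsilon>" using v0 by blast
      have Ov0: "Op v0 \<in> U" using v0 by blast
      obtain F r where F: "finite F" "r > 0" "{w \<in> s_space \<epsilon>. \<forall>\<alpha>\<in>F. seminorm_s \<epsilon> \<alpha> (w - Op v0) < r} \<subseteq> U"
        by (rule sopen_D[OF U Ov0])
      define S where "S = (\<Sum>\<alpha>\<in>F. Cf \<alpha> * real (card (Gf \<alpha>)))"
      have S0: "0 \<le> S" unfolding S_def using GC by (intro sum_nonneg) simp
      define r' where "r' = r / (1 + S)"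
      have r'0: "0 < r'" unfolding r'_def using F S0 by simp
      show "\<exists>F' r'. finite F' \<and> r' > 0 \<and> {w \<in> s_space \<epsilon>. \<forall>\<beta>\<in>F'. seminorm_s \<epsilon> \<beta> (w - v0) < r'} \<subseteq> {x \<in> s_space \<epsilon>. Op x \<in> U}"
      proof (intro exI[of _ "\<Union>(Gf ` F)"] exI[of _ r'] conjI subsetI)
        show "finite (\<Union>(Gf ` F))" using F GC by simp
        show "0 < r'" by (rule r'0)
        fix w :: "int^'n \<Rightarrow> complex" assume w: "w \<in> {w \<in> s_space \<epsilon>. \<forall>\<beta>\<in>\<Union>(Gf ` F). seminorm_s \<epsilon> \<beta> (w - v0) < r'}"
        have ws: "w \<in> s_space \<epsilon>" using w by blast
        have "Op w \<in> {w \<in> s_space \<epsilon>. \<forall>\<alpha>\<in>F. seminorm_s \<epsilon> \<alpha> (w - Op v0) < r}"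
        proof (intro CollectI conjI ballI)
          show "Op w \<in> s_space \<epsilon>" by (rule maps[OF ws])
          fix \<alpha> assume \<alpha>: "\<alpha> \<in> F"
          have d: "w - v0 \<in> s_space \<epsilon>" by (rule s_space_diff[OF ws v0s])
          have "seminorm_s \<epsilon> \<alpha> (Op w - Op v0) = seminorm_s \<epsilon> \<alpha> (Op (w - v0))" using lin[OF ws v0s] by simp
          also have "\<dots> \<le> Cf \<alpha> * (\<Sum>\<beta>\<in>Gf \<alpha>. seminorm_s \<epsilon> \<beta> (w - v0))" using GC d by blast
          also have "\<dots> \<le> Cf \<alpha> * (real (card (Gf \<alpha>)) * r')"
          proof (rule mult_left_mono)
            have "(\<Sum>\<beta>\<in>Gf \<alpha>. seminorm_s \<epsilon> \<beta> (w - v0)) \<le> (\<Sum>\<beta>\<in>Gf \<alpha>. r')"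
              by (rule sum_mono) (use w \<alpha> in \<open>auto intro: less_imp_le\<close>)
            then show "(\<Sum>\<beta>\<in>Gf \<alpha>. seminorm_s \<epsilon> \<beta> (w - v0)) \<le> real (card (Gf \<alpha>)) * r'" by simp
          qed (use GC in auto)
          also have "\<dots> = (Cf \<alpha> * real (card (Gf \<alpha>))) * r'" by simp
          also have "\<dots> \<le> S * r'"
          proof (rule mult_right_mono)
            show "Cf \<alpha> * real (card (Gf \<alpha>)) \<le> S" unfolding S_def
              by (rule member_le_sum[OF \<alpha>]) (use GC F in auto)
          qed (use r'0 in simp)
          also have "\<dots> < r" unfolding r'_def using F S0 by (simp add: field_simps)
          finally show "seminorm_s \<epsilon> \<alpha> (Op w - Op v0) < r" .
        qed
        then show "w \<in> {x \<in> s_space \<epsilon>. Op x \<in> U}" using F(3) ws by blast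
      qed
    qed
  qed
qed

theorem lemmaA2:
  fixes \<delta> \<epsilon> :: real
    and m :: "real^'n \<Rightarrow> real^'n \<Rightarrow> real"
    and a :: "real^'n \<Rightarrow> real^'n \<Rightarrow> real \<Rightarrow> complex"
  assumes "0 \<le> \<delta>" "\<delta> \<le> 1"
    and "order_function m"
    and "symbol_class 0 \<delta> m a"
    and "0 < \<epsilon>" "\<epsilon> \<le> 1"
  shows "continuous_map (s_topology \<epsilon>) (s_topology \<epsilon>) (OpT \<epsilon> a)"
proof -
  have e: "0 < \<epsilon>" "\<epsilon> \<le> 1" using assms by auto
  obtain C0 N1 where om: "\<forall>x y \<xi> \<eta>. m x \<xi> \<le> C0 * jbr (x - y) powr N1 * m y \<eta>"
    using assms(3) unfolding order_function_def by blast
  have m0: "\<forall>x \<xi>. 0 \<le> m x \<xi>" using assms(3) unfolding order_function_def by blast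
  define P where "P = nat \<lceil>N1\<rceil>"
  define K where "K = Kern \<epsilon> a"
  have Kp: "\<forall>N. \<exists>C\<ge>0. \<forall>k l. Wk (l - k) ^ N * norm (K k l) \<le> C * Wk k ^ P"
    unfolding K_def P_def using kernel_poly[OF om m0 assms(4) e] by blast
  define c where "c = complex_of_real (1 / (2 * pi) ^ CARD('n))"
  have OpE: "OpT \<epsilon> a v = (\<lambda>k. c * infsum (\<lambda>l. K k l * v l) UNIV)" for v
    unfolding OpT_def K_def Kern_def c_def Sbox_def by simp
  show ?thesis
  proof (rule cont_abstract)
    fix \<alpha>
    obtain G Ct where GC: "finite G" "0 \<le> Ct" "\<forall>v\<in>s_space \<epsilon>. \<forall>k.
       wmon \<epsilon> \<alpha> (\<lambda>k. c * infsum (\<lambda>l. K k l * v l) UNIV) k \<le> Ct * (\<Sum>\<beta>\<in>G. seminorm_s \<epsilon> \<beta> v)"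
      using main_est[OF Kp e, of \<alpha> c] by blast
    show "\<exists>G C. finite G \<and> 0 \<le> C \<and> (\<forall>v\<in>s_space \<epsilon>. seminorm_s \<epsilon> \<alpha> (OpT \<epsilon> a v) \<le> C * (\<Sum>\<beta>\<in>G. seminorm_s \<epsilon> \<beta> v))"
    proof (intro exI[of _ G] exI[of _ Ct] conjI ballI)
      show "finite G" "0 \<le> Ct" using GC by auto
      fix v :: "int^'n \<Rightarrow> complex" assume v: "v \<in> s_space \<epsilon>"
      show "seminorm_s \<epsilon> \<alpha> (OpT \<epsilon> a v) \<le> Ct * (\<Sum>\<beta>\<in>G. seminorm_s \<epsilon> \<beta> v)"
        unfolding OpE by (rule sem_le) (use GC(3) v in blast)
    qed
  next
    fix v :: "int^'n \<Rightarrow> complex" assume v: "v \<in> s_space \<epsilon>"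
    show "OpT \<epsilon> a v \<in> s_space \<epsilon>"
      unfolding s_space_def
    proof (safe)
      fix \<alpha>
      obtain G Ct where GC: "finite G" "0 \<le> Ct" "\<forall>v\<in>s_space \<epsilon>. \<forall>k.
         wmon \<epsilon> \<alpha> (\<lambda>k. c * infsum (\<lambda>l. K k l * v l) UNIV) k \<le> Ct * (\<Sum>\<beta>\<in>G. seminorm_s \<epsilon> \<beta> v)"
        using main_est[OF Kp e, of \<alpha> c] by blast
      show "bdd_above (range (wmon \<epsilon> \<alpha> (OpT \<epsilon> a v)))"
        unfolding OpE by (rule bdd_aboveI2) (use GC(3) v in blast)
    qed
  next
    fix v u :: "int^'n \<Rightarrow> complex" assume v: "v \<in> s_space \<epsilon>" and u: "u \<in> s_space \<epsilon>"
    show "OpT \<epsilon> a v - OpT \<epsilon> a u = OpT \<epsilon> a (v - u)"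
      unfolding OpE fun_diff_def using Op_diff[OF Kp v u e] by simp
  qed
qed


end
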